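(* Let $(a_n)_{n<0}$ be a sequence in $\mathbb{Z}((q))$ satisfying the lower bound condition. Define the inverted Habiro series \[ P(x)=\sum_{k\ge0}a_{-k-1}\,\tilde\sigma_{-k-1},\qquad \tilde\sigma_{-k-1}=\frac{(-1)^k q^{\binom{k+1}{2}}}{(x;q)_{k+1}(qx^{-1};q)_k}, \] and coefficients $f_i=\sum_{k=0}^{i}\begin{bmatrix} k+i\\ 2k\end{bmatrix}a_{-k-1}$ for $i\ge 0$. Then, as an identity of $q$-series (each term expanded at $q=0$, with coefficients rational functions of $x$), both sides converge and \[ P(x)=\frac{1}{(q,x,qx^{-1};q)_\infty}\sum_{i\ge0}f_i\,\theta_i(x), \qquad \theta_i(x)=(-1)^iq^{\binom{i+1}{2}}\Big(1+\sum_{n=1}^{\infty}(-1)^nq^{\binom{n+1}{2}+ni}(x^n+x^{-n})\Big). \]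
   Context: Let $v$ be an indeterminate, $q=v^2$; $[n]=\frac{v^n-v^{-n}}{v-v^{-1}}$, $[k]!=[k]\cdots[1]$, $\begin{bmatrix} n\\ k\end{bmatrix}=\frac{[n]\cdots[n-k+1]}{[k]!}$. $q$-Pochhammer symbols: $(a;q)_n=\prod_{j=0}^{n-1}(1-aq^j)$ for $n\in\mathbb{Z}_{\ge0}\cup\{\infty\}$, and $(a_1,\dots,a_r;q)_n=\prod_s(a_s;q)_n$. For $f\in\mathbb{Z}((q))$, $\delta(f)$ is the minimal exponent of $q$ in $f$. A sequence $(a_n)_{n<0}$ satisfies the lower bound condition if there is a constant $C$ with $\delta(a_n)\ge-\frac{n(n+3)}{2}+C$ for all $n<0$. Note $(q,x,qx^{-1};q)_\infty$ equals the Jacobi theta function $\theta(x,q)=\sum_{n\in\mathbb{Z}}(-1)^nx^nq^{n(n-1)/2}$. *)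

theory Defs
  imports "HOL-Computational_Algebra.Formal_Laurent_Series"
          "HOL-Computational_Algebra.Fraction_Field"
          "HOL-Computational_Algebra.Polynomial"
begin

text \<open>Coefficient field: rational functions in x, i.e. the fraction field of Z[x].
  All q-series are represented as formal Laurent series in v (with q = v^2),
  coefficients in Q(x).\<close>

type_synonym ratfun = "int poly fract"
type_synonym vser = "ratfun fls"

definition xvar :: ratfun where "xvar = Fract [:0, 1:] 1"

definition vv :: vser where "vv = fls_X"

definition qq :: vser where "qq = vv ^ 2"

definition xx :: vser where "xx = fls_const xvar"

definition xinv :: vser where "xinv = fls_const (inverse xvar)"

lift_definition fls_of_int_coeffs :: "int fls \<Rightarrow> vser" is
  "\<lambda>f n. (of_int (f n) :: ratfun)"
  by (auto elim: eventually_mono)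

definition embq :: "int fls \<Rightarrow> vser" where
  "embq a = fls_compose_power (fls_of_int_coeffs a) 2"

definition qint :: "nat \<Rightarrow> vser" where
  "qint n = (vv ^ n - inverse vv ^ n) / (vv - inverse vv)"

definition qfact :: "nat \<Rightarrow> vser" where
  "qfact k = (\<Prod>j\<in>{1..k}. qint j)"

definition qbinom :: "nat \<Rightarrow> nat \<Rightarrow> vser" where
  "qbinom n k = (\<Prod>j<k. qint (n - j)) / qfact k"

definition qpoch :: "vser \<Rightarrow> nat \<Rightarrow> vser" where
  "qpoch a n = (\<Prod>j<n. 1 - a * qq ^ j)"

definition fls_conv :: "(nat \<Rightarrow> vser) \<Rightarrow> vser \<Rightarrow> bool" where
  "fls_conv s S \<longleftrightarrow> (\<forall>M::int. eventually (\<lambda>N. \<forall>m\<le>M. fls_nth (s N) m = fls_nth S m) sequentially)"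

definition fls_convergent :: "(nat \<Rightarrow> vser) \<Rightarrow> bool" where
  "fls_convergent s \<longleftrightarrow> (\<exists>S. fls_conv s S)"

definition fls_lim :: "(nat \<Rightarrow> vser) \<Rightarrow> vser" where
  "fls_lim s = (THE S. fls_conv s S)"

definition fls_sums :: "(nat \<Rightarrow> vser) \<Rightarrow> vser \<Rightarrow> bool" where
  "fls_sums f S \<longleftrightarrow> fls_conv (\<lambda>N. \<Sum>k<N. f k) S"

definition fls_summable :: "(nat \<Rightarrow> vser) \<Rightarrow> bool" where
  "fls_summable f \<longleftrightarrow> (\<exists>S. fls_sums f S)"

definition fls_suminf :: "(nat \<Rightarrow> vser) \<Rightarrow> vser" where
  "fls_suminf f = (THE S. fls_sums f S)"

definition qpoch_inf :: "vser \<Rightarrow> vser" where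
  "qpoch_inf a = fls_lim (qpoch a)"

definition lower_bound_cond :: "(int \<Rightarrow> int fls) \<Rightarrow> bool" where
  "lower_bound_cond a \<longleftrightarrow>
     (\<exists>C::int. \<forall>n<0. a n \<noteq> 0 \<longrightarrow> fls_subdegree (a n) \<ge> - (n * (n + 3)) div 2 + C)"

definition sigma_tilde :: "nat \<Rightarrow> vser" where
  "sigma_tilde k = (-1) ^ k * qq ^ (k * (k + 1) div 2) / (qpoch xx (k + 1) * qpoch (qq * xinv) k)"

definition P_term :: "(int \<Rightarrow> int fls) \<Rightarrow> nat \<Rightarrow> vser" where
  "P_term a k = embq (a (- int k - 1)) * sigma_tilde k"

definition f_coef :: "(int \<Rightarrow> int fls) \<Rightarrow> nat \<Rightarrow> vser" where
  "f_coef a i = (\<Sum>k\<in>{0..i}. qbinom (k + i) (2 * k) * embq (a (- int k - 1)))"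

text \<open>Term n+1 (n \<ge> 0) of the inner series of theta_i.\<close>

definition theta_inner_term :: "nat \<Rightarrow> nat \<Rightarrow> vser" where
  "theta_inner_term i n = (let m = n + 1 in
     (-1) ^ m * qq ^ (m * (m + 1) div 2 + m * i) * (xx ^ m + xinv ^ m))"

definition theta :: "nat \<Rightarrow> vser" where
  "theta i = (-1) ^ i * qq ^ (i * (i + 1) div 2) * (1 + fls_suminf (theta_inner_term i))"

end

theory Submission
  imports Defs
begin

definition lo :: "vser \<Rightarrow> int \<Rightarrow> bool" where
  "lo f M \<longleftrightarrow> (\<forall>m<M. fls_nth f m = 0)"

lemma lo_iff: "lo f M \<longleftrightarrow> f = 0 \<or> M \<le> fls_subdegree f"
proof
  assume "lo f M"
  show "f = 0 \<or> M \<le> fls_subdegree f"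
  proof (cases "f = 0")
    case False
    then have "fls_nth f (fls_subdegree f) \<noteq> 0" by (intro nth_fls_subdegree_nonzero)
    with \<open>lo f M\<close> show ?thesis unfolding lo_def by (meson not_le)
  qed simp
next
  assume "f = 0 \<or> M \<le> fls_subdegree f"
  then show "lo f M" unfolding lo_def by auto
qed

lemma lo_0 [simp]: "lo 0 M" by (simp add: lo_def)

lemma lo_mono: "lo f M \<Longrightarrow> M' \<le> M \<Longrightarrow> lo f M'"
  by (auto simp: lo_def)

lemma lo_add: "lo f M \<Longrightarrow> lo g M \<Longrightarrow> lo (f + g) M"
  by (auto simp: lo_def)

lemma lo_uminus [simp]: "lo (- f) M = lo f M"
  by (auto simp: lo_def)

lemma lo_diff: "lo f M \<Longrightarrow> lo g M \<Longrightarrow> lo (f - g) M"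
  by (auto simp: lo_def)

lemma lo_swap: "lo (a - b) M \<longleftrightarrow> lo (b - a) M"
  by (metis lo_uminus minus_diff_eq)

lemma lo_mult: "lo f a \<Longrightarrow> lo g b \<Longrightarrow> lo (f * g) (a + b)"
  unfolding lo_iff by (cases "f = 0"; cases "g = 0") auto

lemma lo_sum: "(\<And>k. k \<in> A \<Longrightarrow> lo (f k) M) \<Longrightarrow> lo (\<Sum>k\<in>A. f k) M"
  by (induction A rule: infinite_finite_induct) (auto intro: lo_add)

lemma lo_const [simp]: "lo (fls_const c) 0"
  by (simp add: lo_iff)

lemma lo_one [simp]: "lo 1 0"
  by (simp add: lo_iff)

lemma lo_subdeg [simp]: "lo f (fls_subdegree f)"
  by (simp add: lo_iff)

lemma lo_vv_powi [simp]: "lo (vv powi k) k"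
  by (simp add: lo_iff vv_def)

lemma lo_vv_power [simp]: "lo (vv ^ k) (int k)"
  by (simp add: lo_iff vv_def)

lemma lo_qq_power [simp]: "lo (qq ^ k) (2 * int k)"
  by (simp add: lo_iff vv_def qq_def power_mult[symmetric])

lemma lo_inverse_unit: "fls_subdegree f = 0 \<Longrightarrow> lo (inverse f) 0"
  by (simp add: lo_iff)

lemma lo_power: "lo f a \<Longrightarrow> lo (f ^ n) (int n * a)"
proof (induction n)
  case (Suc n)
  then have "lo (f * f ^ n) (a + int n * a)" by (intro lo_mult) auto
  then show ?case by (simp add: algebra_simps)
qed simp

lemma lo_prod: "(\<And>k. k \<in> A \<Longrightarrow> lo (f k) 0) \<Longrightarrow> lo (\<Prod>k\<in>A. f k) 0"
proof (induction A rule: infinite_finite_induct)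
  case (insert x F)
  then have "lo (f x * prod f F) (0 + 0)" by (intro lo_mult) auto
  then show ?case using insert by simp
qed auto

lemma lo_eqI: "lo (f - g) M \<Longrightarrow> m < M \<Longrightarrow> fls_nth f m = fls_nth g m"
  by (auto simp: lo_def)

lemma lo_all_zero: "(\<And>M. lo f M) \<Longrightarrow> f = 0"
  by (metis lo_iff gt_ex not_le)

section \<open>Convergence\<close>

definition tends :: "(nat \<Rightarrow> vser) \<Rightarrow> vser \<Rightarrow> bool" where
  "tends s S \<longleftrightarrow> (\<forall>M. eventually (\<lambda>N. lo (s N - S) M) sequentially)"

lemma fls_conv_iff: "fls_conv s S \<longleftrightarrow> tends s S"
proof
  assume a: "fls_conv s S"
  show "tends s S" unfolding tends_def
  proof
    fix M
    from a have "eventually (\<lambda>N. \<forall>m\<le>M - 1. fls_nth (s N) m = fls_nth S m) sequentially"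
      unfolding fls_conv_def by blast
    then show "eventually (\<lambda>N. lo (s N - S) M) sequentially"
      by eventually_elim (auto simp: lo_def)
  qed
next
  assume a: "tends s S"
  show "fls_conv s S" unfolding fls_conv_def
  proof
    fix M
    from a have "eventually (\<lambda>N. lo (s N - S) (M + 1)) sequentially"
      unfolding tends_def by blast
    then show "eventually (\<lambda>N. \<forall>m\<le>M. fls_nth (s N) m = fls_nth S m) sequentially"
      by eventually_elim (auto simp: lo_def)
  qed
qed

lemma tends_unique: "tends s S \<Longrightarrow> tends s T \<Longrightarrow> S = T"
proof -
  assume a: "tends s S" "tends s T"
  have "lo (S - T) M" for M
  proof -
    from a have "eventually (\<lambda>N. lo (s N - S) M \<and> lo (s N - T) M) sequentially"
      unfolding tends_def by (auto intro: eventually_conj)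
    then obtain N where "lo (s N - S) M" "lo (s N - T) M"
      using eventually_sequentially by auto
    then have "lo ((s N - T) - (s N - S)) M" by (rule lo_diff[rotated])
    then show ?thesis by simp
  qed
  then have "S - T = 0" by (rule lo_all_zero)
  then show "S = T" by simp
qed

lemma tends_lim: "tends s S \<Longrightarrow> fls_lim s = S"
  unfolding fls_lim_def fls_conv_iff using tends_unique by blast

lemma tends_convergent: "tends s S \<Longrightarrow> fls_convergent s"
  unfolding fls_convergent_def fls_conv_iff by (rule exI)

lemma tends_sums: "tends (\<lambda>N. \<Sum>k<N. f k) S \<Longrightarrow> fls_sums f S"
  unfolding fls_sums_def fls_conv_iff by blast

lemma tends_suminf: "tends (\<lambda>N. \<Sum>k<N. f k) S \<Longrightarrow> fls_suminf f = S"
  unfolding fls_suminf_def fls_sums_def fls_conv_iff using tends_unique by blast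

lemma tends_summable: "tends (\<lambda>N. \<Sum>k<N. f k) S \<Longrightarrow> fls_summable f"
  unfolding fls_summable_def fls_sums_def fls_conv_iff by blast

lemma tends_const [simp]: "tends (\<lambda>N. c) c"
  by (simp add: tends_def)

lemma tends_add: "tends s S \<Longrightarrow> tends t T \<Longrightarrow> tends (\<lambda>N. s N + t N) (S + T)"
  unfolding tends_def
proof (intro allI)
  fix M assume a: "\<forall>M. eventually (\<lambda>N. lo (s N - S) M) sequentially"
    "\<forall>M. eventually (\<lambda>N. lo (t N - T) M) sequentially"
  then have "eventually (\<lambda>N. lo (s N - S) M \<and> lo (t N - T) M) sequentially"
    by (auto intro: eventually_conj)
  then show "eventually (\<lambda>N. lo (s N + t N - (S + T)) M) sequentially"
  proof eventually_elim
    case (elim N)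
    then have "lo ((s N - S) + (t N - T)) M" by (intro lo_add) auto
    then show ?case by (simp add: algebra_simps)
  qed
qed


lemma tends_iff_zero: "tends s S \<longleftrightarrow> tends (\<lambda>N. s N - S) 0"
  by (simp add: tends_def)

lemma tends_zero_lo: "tends f 0 \<longleftrightarrow> (\<forall>M. eventually (\<lambda>N. lo (f N) M) sequentially)"
  by (simp add: tends_def)

lemma tends_uminus: "tends s S \<Longrightarrow> tends (\<lambda>N. - s N) (- S)"
  unfolding tends_def
proof (intro allI)
  fix M assume "\<forall>M. eventually (\<lambda>N. lo (s N - S) M) sequentially"
  then have "eventually (\<lambda>N. lo (s N - S) M) sequentially" by blast
  then show "eventually (\<lambda>N. lo (- s N - - S) M) sequentially"
  proof eventually_elim
    case (elim N)
    then show ?case by (simp add: lo_swap)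
  qed
qed

lemma tends_diff: "tends s S \<Longrightarrow> tends t T \<Longrightarrow> tends (\<lambda>N. s N - t N) (S - T)"
  using tends_add[of s S "\<lambda>N. - t N" "- T"] tends_uminus[of t T] by simp

lemma tends_cmult: "tends s S \<Longrightarrow> tends (\<lambda>N. c * s N) (c * S)"
  unfolding tends_def
proof (intro allI)
  fix M assume "\<forall>M. eventually (\<lambda>N. lo (s N - S) M) sequentially"
  then have "eventually (\<lambda>N. lo (s N - S) (M - fls_subdegree c)) sequentially" by blast
  then show "eventually (\<lambda>N. lo (c * s N - c * S) M) sequentially"
  proof eventually_elim
    case (elim N)
    then have "lo (c * (s N - S)) (fls_subdegree c + (M - fls_subdegree c))"
      by (intro lo_mult) auto
    then show ?case by (simp add: algebra_simps)
  qed
qed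

lemma tends_multc: "tends s S \<Longrightarrow> tends (\<lambda>N. s N * c) (S * c)"
  using tends_cmult[of s S c] by (simp add: mult.commute)

lemma tends_lo: "tends s S \<Longrightarrow> eventually (\<lambda>N. lo (s N) M) sequentially \<Longrightarrow> lo S M"
proof -
  assume a: "tends s S" "eventually (\<lambda>N. lo (s N) M) sequentially"
  then have "eventually (\<lambda>N. lo (s N) M \<and> lo (s N - S) M) sequentially"
    unfolding tends_def by (auto intro: eventually_conj)
  then obtain N where "lo (s N) M" "lo (s N - S) M" using eventually_sequentially by auto
  then have "lo (s N - (s N - S)) M" by (rule lo_diff)
  then show ?thesis by simp
qed

lemma tends_bounded: "tends s S \<Longrightarrow> eventually (\<lambda>N. lo (s N) (fls_subdegree S)) sequentially"
proof -
  assume "tends s S"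
  then have "eventually (\<lambda>N. lo (s N - S) (fls_subdegree S)) sequentially"
    unfolding tends_def by blast
  then show ?thesis
  proof eventually_elim
    case (elim N)
    then have "lo ((s N - S) + S) (fls_subdegree S)" by (intro lo_add) auto
    then show ?case by simp
  qed
qed

lemma tends_mult: "tends s S \<Longrightarrow> tends t T \<Longrightarrow> tends (\<lambda>N. s N * t N) (S * T)"
proof -
  assume a: "tends s S" "tends t T"
  show ?thesis unfolding tends_def
  proof
    fix M
    let ?L = "fls_subdegree S" and ?L' = "fls_subdegree T"
    have e2: "eventually (\<lambda>N. lo (t N - T) (M - ?L)) sequentially"
      and e3: "eventually (\<lambda>N. lo (s N - S) (M - ?L')) sequentially"
      using a unfolding tends_def by auto
    have "eventually (\<lambda>N. lo (s N) ?L \<and> lo (t N - T) (M - ?L) \<and> lo (s N - S) (M - ?L')) sequentially"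
      using eventually_conj[OF tends_bounded[OF a(1)] eventually_conj[OF e2 e3]] .
    then show "eventually (\<lambda>N. lo (s N * t N - S * T) M) sequentially"
    proof eventually_elim
      case (elim N)
      then have "lo (s N * (t N - T)) (?L + (M - ?L))" "lo ((s N - S) * T) ((M - ?L') + ?L')"
        by (intro lo_mult; simp)+
      then have "lo (s N * (t N - T) + (s N - S) * T) M" by (intro lo_add) simp_all
      then show ?case by (simp add: algebra_simps)
    qed
  qed
qed

lemma tends_sum: "finite A \<Longrightarrow> (\<And>j. j \<in> A \<Longrightarrow> tends (s j) (S j)) \<Longrightarrow>
   tends (\<lambda>N. \<Sum>j\<in>A. s j N) (\<Sum>j\<in>A. S j)"
  by (induction A rule: finite_induct) (auto intro: tends_add)

lemma tends_cong: "eventually (\<lambda>N. s N = t N) sequentially \<Longrightarrow> tends s S \<Longrightarrow> tends t S"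
  unfolding tends_def
proof (intro allI)
  fix M assume "eventually (\<lambda>N. s N = t N) sequentially" "\<forall>M. eventually (\<lambda>N. lo (s N - S) M) sequentially"
  then have "eventually (\<lambda>N. s N = t N \<and> lo (s N - S) M) sequentially" by (auto intro: eventually_conj)
  then show "eventually (\<lambda>N. lo (t N - S) M) sequentially" by eventually_elim auto
qed

lemma tends_shift: "tends s S \<Longrightarrow> tends (\<lambda>N. s (N + k)) S"
  unfolding tends_def
proof (intro allI)
  fix M assume "\<forall>M. eventually (\<lambda>N. lo (s N - S) M) sequentially"
  then have "eventually (\<lambda>N. lo (s N - S) M) sequentially" by blast
  then obtain N0 where "\<And>N. N \<ge> N0 \<Longrightarrow> lo (s N - S) M" by (auto simp: eventually_sequentially)
  then show "eventually (\<lambda>N. lo (s (N + k) - S) M) sequentially"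
    by (auto simp: eventually_sequentially intro!: exI[of _ N0])
qed

lemma tends_unshift: "tends (\<lambda>N. s (N + k)) S \<Longrightarrow> tends s S"
  unfolding tends_def
proof (intro allI)
  fix M assume "\<forall>M. eventually (\<lambda>N. lo (s (N + k) - S) M) sequentially"
  then have "eventually (\<lambda>N. lo (s (N + k) - S) M) sequentially" by blast
  then obtain N0 where N0: "\<And>N. N \<ge> N0 \<Longrightarrow> lo (s (N + k) - S) M" by (auto simp: eventually_sequentially)
  show "eventually (\<lambda>N. lo (s N - S) M) sequentially"
    unfolding eventually_sequentially
  proof (intro exI allI impI)
    fix N assume "N \<ge> N0 + k"
    then show "lo (s N - S) M" using N0[of "N - k"] by simp
  qed
qed

lift_definition mkfls :: "(int \<Rightarrow> 'a::zero) \<Rightarrow> int \<Rightarrow> 'a fls" is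
  "\<lambda>c L m. if m < L then 0 else c m"
proof -
  fix c :: "int \<Rightarrow> 'a" and L :: int
  have "eventually (\<lambda>n::nat. (if - int n < L then 0 else c (- int n)) = 0) sequentially"
    unfolding eventually_sequentially by (intro exI[of _ "nat (1 - L)"]) auto
  then show "\<forall>\<^sub>\<infinity>n. (if - int n < L then 0 else c (- int n)) = 0"
    by (simp add: cofinite_eq_sequentially)
qed

lemma mkfls_nth: "fls_nth (mkfls c L) m = (if m < L then 0 else c m)"
  by transfer simp

lemma cauchy_complete:
  fixes p :: "nat \<Rightarrow> vser" and K :: "int \<Rightarrow> nat" and L :: int
  assumes bnd: "\<And>N. lo (p N) L"
    and cau: "\<And>M N N'. N \<ge> K M \<Longrightarrow> N' \<ge> K M \<Longrightarrow> lo (p N - p N') M"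
  shows "\<exists>S. tends p S"
proof -
  define S where "S = mkfls (\<lambda>m. fls_nth (p (K (m + 1))) m) L"
  have "tends p S" unfolding tends_def
  proof
    fix M
    define N0 where "N0 = (\<Sum>j\<in>{L..<M}. K (j + 1))"
    have "lo (p N - S) M" if "N \<ge> N0" for N
      unfolding lo_def
    proof (intro allI impI)
      fix m assume "m < M"
      show "fls_nth (p N - S) m = 0"
      proof (cases "m < L")
        case True
        then show ?thesis using bnd[of N] by (simp add: S_def mkfls_nth lo_def)
      next
        case False
        then have "m \<in> {L..<M}" using \<open>m < M\<close> by auto
        then have "K (m + 1) \<le> N0" unfolding N0_def
          by (intro member_le_sum) auto
        then have "lo (p N - p (K (m + 1))) (m + 1)" using that by (intro cau) auto
        then show ?thesis using False by (simp add: S_def mkfls_nth lo_def)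
      qed
    qed
    then show "eventually (\<lambda>N. lo (p N - S) M) sequentially"
      unfolding eventually_sequentially by blast
  qed
  then show ?thesis by blast
qed

lemma summable_crit:
  assumes "tends f 0"
  shows "\<exists>S. tends (\<lambda>N. \<Sum>k<N. f k) S"
proof -
  have "\<forall>M. \<exists>K. \<forall>k\<ge>K. lo (f k) M"
    using assms unfolding tends_zero_lo eventually_sequentially by blast
  then obtain K where K: "\<And>M k. k \<ge> K M \<Longrightarrow> lo (f k) M" by metis
  define L where "L = - (\<Sum>k<K 0. \<bar>fls_subdegree (f k)\<bar>)"
  have L0: "L \<le> 0" unfolding L_def by (simp add: sum_nonneg)
  have fL: "lo (f k) L" for k
  proof (cases "k < K 0")
    case True
    have "\<bar>fls_subdegree (f k)\<bar> \<le> (\<Sum>k<K 0. \<bar>fls_subdegree (f k)\<bar>)"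
      using True by (intro member_le_sum[where f="\<lambda>k. \<bar>fls_subdegree (f k)\<bar>"]) auto
    then have "L \<le> fls_subdegree (f k)" unfolding L_def by linarith
    then show ?thesis by (simp add: lo_iff)
  next
    case False
    then show ?thesis using K[of 0 k] L0 lo_mono by auto
  qed
  have "\<exists>S. tends (\<lambda>N. \<Sum>k<N. f k) S"
  proof (rule cauchy_complete[where L = L and K = K])
    show "lo (\<Sum>k<N. f k) L" for N by (intro lo_sum fL)
  next
    fix M N N' assume a: "N \<ge> K M" "N' \<ge> K M"
    have gen: "lo ((\<Sum>k<B. f k) - (\<Sum>k<A. f k)) M" if "K M \<le> A" "A \<le> B" for A B
    proof -
      have "(\<Sum>k<B. f k) = (\<Sum>k\<in>{0..<A}. f k) + (\<Sum>k\<in>{A..<B}. f k)"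
        unfolding atLeast0LessThan[symmetric] using that by (intro sum.atLeastLessThan_concat[symmetric]) auto
      then have "(\<Sum>k<B. f k) - (\<Sum>k<A. f k) = (\<Sum>k\<in>{A..<B}. f k)"
        by (simp add: atLeast0LessThan)
      also have "lo \<dots> M" using that by (intro lo_sum K) auto
      finally show ?thesis .
    qed
    show "lo ((\<Sum>k<N. f k) - (\<Sum>k<N'. f k)) M"
    proof (cases "N \<le> N'")
      case True
      then have "lo ((\<Sum>k<N'. f k) - (\<Sum>k<N. f k)) M" using a by (intro gen)
      then show ?thesis by (simp add: lo_swap)
    next
      case False
      then show ?thesis using a by (intro gen) auto
    qed
  qed
  then show ?thesis .
qed

lemma vv_nz [simp]: "vv \<noteq> 0" by (simp add: vv_def)

lemma vpow_add: "vv powi (a + b) = vv powi a * vv powi b"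
  by (simp add: power_int_add)

lemma qq_pow: "qq ^ n = vv powi (2 * int n)"
  by (simp add: qq_def power_int_mult[symmetric] power_mult[symmetric])
     (metis power_int_of_nat power_mult of_nat_mult of_nat_numeral)

lemma qq_eq: "qq = vv powi 2"
  using qq_pow[of 1] by simp

lemma xvar_nz [simp]: "xvar \<noteq> 0"
  by (simp add: xvar_def Zero_fract_def eq_fract)

definition xp :: "int \<Rightarrow> vser" where "xp n = fls_const (xvar powi n)"

lemma xp_add: "xp (a + b) = xp a * xp b"
  by (simp add: xp_def power_int_add fls_const_mult_const)

lemma xp_0 [simp]: "xp 0 = 1" by (simp add: xp_def)
lemma xp_1: "xp 1 = xx" by (simp add: xp_def xx_def)
lemma xp_m1: "xp (-1) = xinv" by (simp add: xp_def xinv_def power_int_minus)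

lemma xx_xinv: "xx * xinv = 1"
  by (simp add: xx_def xinv_def fls_const_mult_const)

lemma xx_power: "xx ^ n = xp (int n)"
  by (induction n) (auto simp: xp_1[symmetric] xp_add[symmetric] add.commute)

lemma xinv_power: "xinv ^ n = xp (- int n)"
  by (induction n) (auto simp: xp_m1[symmetric] xp_add[symmetric] add.commute)

lemma lo_xp [simp]: "lo (xp n) 0" by (simp add: xp_def)

lemma lo_mult_xp: "lo c M \<Longrightarrow> lo (c * xp n) M"
proof -
  assume "lo c M"
  then have "lo (c * xp n) (M + 0)" by (rule lo_mult) simp
  then show ?thesis by simp
qed

lemma suminf_tends: "tends f 0 \<Longrightarrow> tends (\<lambda>N. \<Sum>k<N. f k) (fls_suminf f)"
  using summable_crit tends_suminf by metis

lemma tail_lo: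
  assumes "tends f 0" "\<And>i. i \<ge> N \<Longrightarrow> lo (f i) M"
  shows "lo (fls_suminf f - (\<Sum>k<N. f k)) M"
proof -
  have t: "tends (\<lambda>K. (\<Sum>k<K + N. f k) - (\<Sum>k<N. f k)) (fls_suminf f - (\<Sum>k<N. f k))"
    by (rule tends_diff[OF tends_shift[OF suminf_tends[OF assms(1)]] tends_const])
  have "lo ((\<Sum>k<K + N. f k) - (\<Sum>k<N. f k)) M" for K
  proof -
    have "(\<Sum>k<K + N. f k) = (\<Sum>k\<in>{0..<N}. f k) + (\<Sum>k\<in>{N..<K+N}. f k)"
      unfolding atLeast0LessThan[symmetric] by (intro sum.atLeastLessThan_concat[symmetric]) auto
    then have "(\<Sum>k<K + N. f k) - (\<Sum>k<N. f k) = (\<Sum>k\<in>{N..<K+N}. f k)"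
      by (simp add: atLeast0LessThan)
    also have "lo \<dots> M" by (intro lo_sum assms(2)) auto
    finally show ?thesis .
  qed
  then show ?thesis using tends_lo[OF t] by simp
qed

lemma suminf_lo: "tends f 0 \<Longrightarrow> (\<And>i. lo (f i) M) \<Longrightarrow> lo (fls_suminf f) M"
  using tail_lo[of f 0 M] by simp

lemma suminf_add: "tends f 0 \<Longrightarrow> tends g 0 \<Longrightarrow> fls_suminf (\<lambda>i. f i + g i) = fls_suminf f + fls_suminf g"
  by (intro tends_suminf) (simp add: sum.distrib tends_add suminf_tends)

lemma suminf_diff: "tends f 0 \<Longrightarrow> tends g 0 \<Longrightarrow> fls_suminf (\<lambda>i. f i - g i) = fls_suminf f - fls_suminf g"
  by (intro tends_suminf) (simp add: sum_subtractf tends_diff suminf_tends)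

lemma suminf_cmult: "tends f 0 \<Longrightarrow> fls_suminf (\<lambda>i. c * f i) = c * fls_suminf f"
proof (intro tends_suminf)
  assume "tends f 0"
  then have "tends (\<lambda>N. c * (\<Sum>k<N. f k)) (c * fls_suminf f)" by (intro tends_cmult suminf_tends)
  moreover have "c * (\<Sum>k<N. f k) = (\<Sum>k<N. c * f k)" for N by (rule sum_distrib_left)
  ultimately show "tends (\<lambda>N. \<Sum>k<N. c * f k) (c * fls_suminf f)" by simp
qed

lemma tends_zero_cmult: "tends f 0 \<Longrightarrow> tends (\<lambda>i. c * f i) 0"
  using tends_cmult[of f 0 c] by simp

lemma tends_zero_add: "tends f 0 \<Longrightarrow> tends g 0 \<Longrightarrow> tends (\<lambda>i. f i + g i) 0"
  using tends_add[of f 0 g 0] by simp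

lemma tends_zero_diff: "tends f 0 \<Longrightarrow> tends g 0 \<Longrightarrow> tends (\<lambda>i. f i - g i) 0"
  using tends_diff[of f 0 g 0] by simp

lemma tends_zero_shift: "tends f 0 \<Longrightarrow> tends (\<lambda>i. f (i + k)) 0"
  using tends_shift by blast

lemma suminf_shift1:
  assumes "tends f 0"
  shows "fls_suminf (\<lambda>i. f (Suc i)) = fls_suminf f - f 0"
proof (rule tends_suminf)
  have "tends (\<lambda>N. (\<Sum>k<N + 1. f k) - f 0) (fls_suminf f - f 0)"
    by (rule tends_diff[OF tends_shift[OF suminf_tends[OF assms(1)]] tends_const])
  moreover have "(\<Sum>k<N + 1. f k) - f 0 = (\<Sum>k<N. f (Suc k))" for N
  proof -
    have "(\<Sum>k<Suc N. f k) = f 0 + (\<Sum>k<N. f (Suc k))" by (rule sum.lessThan_Suc_shift)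
    then show ?thesis by simp
  qed
  ultimately show "tends (\<lambda>N. \<Sum>k<N. f (Suc k)) (fls_suminf f - f 0)" by simp
qed

lemma tends_zero_lo_bound:
  assumes "\<And>i. lo (f i) (h i)" "filterlim h at_top sequentially"
  shows "tends f 0"
  unfolding tends_zero_lo
proof
  fix M
  from assms(2) have "eventually (\<lambda>i. h i \<ge> M) sequentially"
    by (simp add: filterlim_at_top)
  then show "eventually (\<lambda>i. lo (f i) M) sequentially"
    by eventually_elim (use assms(1) lo_mono in blast)
qed

lemma tends_zero_lo_linear:
  assumes "\<And>i. lo (f i) (int i + c)"
  shows "tends f 0"
proof (rule tends_zero_lo_bound[OF assms])
  show "filterlim (\<lambda>i. int i + c) at_top sequentially"
    unfolding filterlim_at_top eventually_sequentially
  proof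
    fix Z :: int show "\<exists>N. \<forall>n\<ge>N. Z \<le> int n + c"
      by (intro exI[of _ "nat (Z - c)"]) auto
  qed
qed

section \<open>Laurent evaluation in x\<close>

definition ssum :: "(int \<Rightarrow> vser) \<Rightarrow> nat \<Rightarrow> vser" where
  "ssum c N = (\<Sum>n\<in>{- int N..int N}. c n * xp n)"

definition dec :: "(int \<Rightarrow> vser) \<Rightarrow> bool" where
  "dec c \<longleftrightarrow> (\<forall>M. \<exists>N0::nat. \<forall>n. int N0 \<le> \<bar>n\<bar> \<longrightarrow> lo (c n) M)"

definition ev :: "(int \<Rightarrow> vser) \<Rightarrow> vser" where
  "ev c = fls_lim (ssum c)"

lemma sum_int_shift: "(\<Sum>n\<in>{a..b}. g (n + k)) = (\<Sum>m\<in>{a+k..b+k}. (g m :: vser))" for a b k :: int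
  by (rule sum.reindex_bij_witness[of _ "\<lambda>m. m - k" "\<lambda>n. n + k"]) auto

lemma ssum_Suc: "ssum c (Suc N) = ssum c N + c (int N + 1) * xp (int N + 1) + c (- int N - 1) * xp (- int N - 1)"
proof -
  have "{- int (Suc N)..int (Suc N)} = insert (int N + 1) (insert (- int N - 1) {- int N..int N})"
    by auto
  then show ?thesis unfolding ssum_def by (simp add: algebra_simps)
qed

lemma dec_D: "dec c \<Longrightarrow> \<exists>N0::nat. \<forall>n. int N0 \<le> \<bar>n\<bar> \<longrightarrow> lo (c n) M"
  unfolding dec_def by blast

lemma ev_tends:
  assumes "dec c"
  shows "tends (ssum c) (ev c)"
proof -
  define d where "d k = ssum c (Suc k) - ssum c k" for k
  have "tends d 0" unfolding tends_zero_lo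
  proof
    fix M
    obtain N0 where N0: "\<And>n. int N0 \<le> \<bar>n\<bar> \<Longrightarrow> lo (c n) M" using dec_D[OF assms] by blast
    have "lo (d k) M" if "k \<ge> N0" for k
    proof -
      have "lo (c (int k + 1) * xp (int k + 1) + c (- int k - 1) * xp (- int k - 1)) M"
        using that by (intro lo_add lo_mult_xp N0) auto
      then show ?thesis unfolding d_def ssum_Suc by (simp add: algebra_simps)
    qed
    then show "eventually (\<lambda>k. lo (d k) M) sequentially"
      unfolding eventually_sequentially by blast
  qed
  then obtain S where S: "tends (\<lambda>N. \<Sum>k<N. d k) S" using summable_crit by blast
  have "(\<Sum>k<N. d k) + ssum c 0 = ssum c N" for N
    unfolding d_def by (simp add: sum_lessThan_telescope)
  then have "tends (ssum c) (S + ssum c 0)"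
    using tends_add[OF S tends_const[of "ssum c 0"]] by simp
  moreover from this have "ev c = S + ssum c 0" unfolding ev_def by (rule tends_lim)
  ultimately show ?thesis by simp
qed

lemma dec_bound: "(\<And>n. lo (c n) (\<bar>n\<bar> + C)) \<Longrightarrow> dec c"
  unfolding dec_def
proof (intro allI)
  fix M assume a: "\<And>n. lo (c n) (\<bar>n\<bar> + C)"
  show "\<exists>N0::nat. \<forall>n. int N0 \<le> \<bar>n\<bar> \<longrightarrow> lo (c n) M"
    by (intro exI[of _ "nat (M - C)"]) (auto intro: lo_mono[OF a])
qed

lemma dec_add: "dec c \<Longrightarrow> dec d \<Longrightarrow> dec (\<lambda>n. c n + d n)"
  unfolding dec_def
proof (intro allI)
  fix M assume "\<forall>M. \<exists>N0::nat. \<forall>n. int N0 \<le> \<bar>n\<bar> \<longrightarrow> lo (c n) M"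
     "\<forall>M. \<exists>N0::nat. \<forall>n. int N0 \<le> \<bar>n\<bar> \<longrightarrow> lo (d n) M"
  then obtain N1 N2 :: nat where "\<forall>n. int N1 \<le> \<bar>n\<bar> \<longrightarrow> lo (c n) M" "\<forall>n. int N2 \<le> \<bar>n\<bar> \<longrightarrow> lo (d n) M"
    by blast
  then show "\<exists>N0::nat. \<forall>n. int N0 \<le> \<bar>n\<bar> \<longrightarrow> lo (c n + d n) M"
    by (intro exI[of _ "N1 + N2"]) (auto intro: lo_add)
qed

lemma dec_cmult: "dec c \<Longrightarrow> dec (\<lambda>n. a * c n)"
  unfolding dec_def
proof (intro allI)
  fix M assume "\<forall>M. \<exists>N0::nat. \<forall>n. int N0 \<le> \<bar>n\<bar> \<longrightarrow> lo (c n) M"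
  then obtain N1 :: nat where N1: "\<forall>n. int N1 \<le> \<bar>n\<bar> \<longrightarrow> lo (c n) (M - fls_subdegree a)"
    by blast
  have "lo (a * c n) M" if "int N1 \<le> \<bar>n\<bar>" for n
    using lo_mult[of a "fls_subdegree a" "c n" "M - fls_subdegree a"] N1 that by simp
  then show "\<exists>N0::nat. \<forall>n. int N0 \<le> \<bar>n\<bar> \<longrightarrow> lo (a * c n) M" by blast
qed

lemma dec_uminus: "dec c \<Longrightarrow> dec (\<lambda>n. - c n)"
  using dec_cmult[of c "-1"] by simp

lemma dec_diff: "dec c \<Longrightarrow> dec d \<Longrightarrow> dec (\<lambda>n. c n - d n)"
  using dec_add[of c "\<lambda>n. - d n"] dec_uminus[of d] by simp

lemma dec_shift: "dec c \<Longrightarrow> dec (\<lambda>n. c (n + k))"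
  unfolding dec_def
proof (intro allI)
  fix M assume "\<forall>M. \<exists>N0::nat. \<forall>n. int N0 \<le> \<bar>n\<bar> \<longrightarrow> lo (c n) M"
  then obtain N1 :: nat where N1: "\<forall>n. int N1 \<le> \<bar>n\<bar> \<longrightarrow> lo (c n) M" by blast
  show "\<exists>N0::nat. \<forall>n. int N0 \<le> \<bar>n\<bar> \<longrightarrow> lo (c (n + k)) M"
    by (intro exI[of _ "N1 + nat \<bar>k\<bar>"]) (use N1 in auto)
qed

lemma dec_fin: "(\<And>n. \<bar>n\<bar> > B \<Longrightarrow> c n = 0) \<Longrightarrow> dec c"
  unfolding dec_def
proof (intro allI)
  fix M assume "\<And>n. \<bar>n\<bar> > B \<Longrightarrow> c n = 0"
  then show "\<exists>N0::nat. \<forall>n. int N0 \<le> \<bar>n\<bar> \<longrightarrow> lo (c n) M"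
    by (intro exI[of _ "nat (B + 1)"]) auto
qed

lemma ssum_add: "ssum (\<lambda>n. c n + d n) = (\<lambda>N. ssum c N + ssum d N)"
  unfolding ssum_def fun_eq_iff by (simp add: algebra_simps sum.distrib)

lemma ssum_cmult: "ssum (\<lambda>n. a * c n) = (\<lambda>N. a * ssum c N)"
  unfolding ssum_def fun_eq_iff by (simp add: sum_distrib_left mult.assoc)

lemma ev_eqI: "tends (ssum c) S \<Longrightarrow> ev c = S"
  unfolding ev_def by (rule tends_lim)

lemma ev_add: "dec c \<Longrightarrow> dec d \<Longrightarrow> ev (\<lambda>n. c n + d n) = ev c + ev d"
  by (intro ev_eqI) (simp add: ssum_add tends_add ev_tends)

lemma ev_cmult: "dec c \<Longrightarrow> ev (\<lambda>n. a * c n) = a * ev c"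
  by (intro ev_eqI) (simp add: ssum_cmult tends_cmult ev_tends)

lemma ev_uminus: "dec c \<Longrightarrow> ev (\<lambda>n. - c n) = - ev c"
  using ev_cmult[of c "-1"] by simp

lemma ev_diff: "dec c \<Longrightarrow> dec d \<Longrightarrow> ev (\<lambda>n. c n - d n) = ev c - ev d"
  using ev_add[of c "\<lambda>n. - d n"] ev_uminus[of d] dec_uminus[of d] by simp

lemma ev_lo: "dec c \<Longrightarrow> (\<And>n. lo (c n) M) \<Longrightarrow> lo (ev c) M"
proof -
  assume a: "dec c" "\<And>n. lo (c n) M"
  have "lo (ssum c N) M" for N unfolding ssum_def by (intro lo_sum lo_mult_xp a)
  then have "eventually (\<lambda>N. lo (ssum c N) M) sequentially" by simp
  then show ?thesis by (rule tends_lo[OF ev_tends[OF a(1)]])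
qed

lemma ev_cong: "(\<And>n. c n = d n) \<Longrightarrow> ev c = ev d"
  by (metis ext)

lemma ev_fin:
  assumes "\<And>n. \<bar>n\<bar> > int B \<Longrightarrow> c n = 0"
  shows "ev c = ssum c B"
proof (rule ev_eqI)
  have fin: "ssum c N = ssum c B" if "N \<ge> B" for N
    using that
  proof (induction N rule: dec_induct)
    case (step N)
    then show ?case using assms[of "int N + 1"] assms[of "- int N - 1"] by (simp add: ssum_Suc)
  qed simp
  show "tends (ssum c) (ssum c B)"
  proof (rule tends_cong[OF _ tends_const])
    show "eventually (\<lambda>N. ssum c B = ssum c N) sequentially"
      unfolding eventually_sequentially using fin by metis
  qed
qed

lemma ev_delta: "ev (\<lambda>n. if n = 0 then a else 0) = a"
  by (subst ev_fin[where B=0]) (auto simp: ssum_def)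

lemma ev_shift:
  assumes "dec c"
  shows "ev (\<lambda>n. c (n - 1)) = xx * ev c"
proof (rule ev_eqI)
  define c' where "c' n = c (n - 1)" for n
  have "dec c'" unfolding c'_def using dec_shift[OF assms, of "-1"] by simp
  have eq: "xx * ssum c N = ssum c' N - c' (- int N) * xp (- int N) + c' (int N + 1) * xp (int N + 1)" for N
  proof -
    have "xx * ssum c N = (\<Sum>n\<in>{- int N..int N}. c' (n + 1) * xp (n + 1))"
      unfolding ssum_def c'_def by (simp add: sum_distrib_left xp_add xp_1 algebra_simps)
    also have "\<dots> = (\<Sum>n\<in>{- int N + 1..int N + 1}. c' n * xp n)"
      by (rule sum_int_shift)
    also have "{- int N + 1..int N + 1} = insert (int N + 1) ({- int N..int N} - {- int N})"
      by auto
    also have "(\<Sum>n\<in>\<dots>. c' n * xp n) = c' (int N + 1) * xp (int N + 1) + (ssum c' N - c' (- int N) * xp (- int N))"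
      unfolding ssum_def by (subst sum.insert) (auto simp: sum_diff1)
    finally show ?thesis by (simp add: algebra_simps)
  qed
  have t0: "tends (\<lambda>N. c' (- int N) * xp (- int N)) 0" "tends (\<lambda>N. c' (int N + 1) * xp (int N + 1)) 0"
    unfolding tends_zero_lo
  proof -
    show "\<forall>M. eventually (\<lambda>N. lo (c' (- int N) * xp (- int N)) M) sequentially"
    proof
      fix M obtain N0 where "\<And>n. int N0 \<le> \<bar>n\<bar> \<Longrightarrow> lo (c' n) M" using dec_D[OF \<open>dec c'\<close>] by blast
      then show "eventually (\<lambda>N. lo (c' (- int N) * xp (- int N)) M) sequentially"
        unfolding eventually_sequentially by (intro exI[of _ N0]) (auto intro: lo_mult_xp)
    qed
    show "\<forall>M. eventually (\<lambda>N. lo (c' (int N + 1) * xp (int N + 1)) M) sequentially"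
    proof
      fix M obtain N0 where "\<And>n. int N0 \<le> \<bar>n\<bar> \<Longrightarrow> lo (c' n) M" using dec_D[OF \<open>dec c'\<close>] by blast
      then show "eventually (\<lambda>N. lo (c' (int N + 1) * xp (int N + 1)) M) sequentially"
        unfolding eventually_sequentially by (intro exI[of _ N0]) (auto intro: lo_mult_xp)
    qed
  qed
  have "tends (\<lambda>N. ssum c' N - c' (- int N) * xp (- int N) + c' (int N + 1) * xp (int N + 1)) (ev c' - 0 + 0)"
    by (intro tends_add tends_diff ev_tends \<open>dec c'\<close> t0)
  then have "tends (\<lambda>N. xx * ssum c N) (ev c')" by (simp add: eq)
  moreover have "tends (\<lambda>N. xx * ssum c N) (xx * ev c)" by (intro tends_cmult ev_tends assms)
  ultimately have "ev c' = xx * ev c" by (rule tends_unique)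
  then show "tends (ssum (\<lambda>n. c (n - 1))) (xx * ev c)"
    using ev_tends[OF \<open>dec c'\<close>] unfolding c'_def by simp
qed

lemma ev_shift':
  assumes "dec c"
  shows "ev (\<lambda>n. c (n + 1)) = xinv * ev c"
proof -
  define d where "d = (\<lambda>n. c (n + 1))"
  have "dec d" unfolding d_def by (rule dec_shift[OF assms])
  have "ev (\<lambda>n. d (n - 1)) = xx * ev d" by (rule ev_shift[OF \<open>dec d\<close>])
  then have "ev c = xx * ev d" unfolding d_def by simp
  then have "xinv * ev c = (xx * xinv) * ev d" by (simp add: algebra_simps)
  then show ?thesis by (simp add: xx_xinv d_def)
qed

definition uvan :: "(nat \<Rightarrow> int \<Rightarrow> vser) \<Rightarrow> bool" where
  "uvan g \<longleftrightarrow> (\<forall>M. eventually (\<lambda>i. \<forall>n. lo (g i n) M) sequentially)"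

lemma ev_limit:
  assumes "\<And>j. dec (c j)" "dec d" "uvan (\<lambda>j n. c j n - d n)"
  shows "tends (\<lambda>j. ev (c j)) (ev d)"
  unfolding tends_def
proof
  fix M
  from assms(3) have "eventually (\<lambda>j. \<forall>n. lo (c j n - d n) M) sequentially" unfolding uvan_def by blast
  then show "eventually (\<lambda>j. lo (ev (c j) - ev d) M) sequentially"
  proof eventually_elim
    case (elim j)
    have "lo (ev (\<lambda>n. c j n - d n)) M" by (intro ev_lo dec_diff assms) (use elim in auto)
    then show ?case by (simp add: ev_diff assms)
  qed
qed

lemma uvan_tends: "uvan g \<Longrightarrow> tends (\<lambda>i. g i n) 0"
  unfolding uvan_def tends_zero_lo
proof (intro allI)
  fix M assume "\<forall>M. eventually (\<lambda>i. \<forall>n. lo (g i n) M) sequentially"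
  then have "eventually (\<lambda>i. \<forall>n. lo (g i n) M) sequentially" by blast
  then show "eventually (\<lambda>i. lo (g i n) M) sequentially" by (rule eventually_mono) blast
qed

lemma uvan_dec_suminf:
  assumes "uvan g" "\<And>i. dec (g i)"
  shows "dec (\<lambda>n. fls_suminf (\<lambda>i. g i n))"
  unfolding dec_def
proof
  fix M
  from assms(1) obtain I where I: "\<And>i n. i \<ge> I \<Longrightarrow> lo (g i n) M"
    unfolding uvan_def eventually_sequentially by blast
  have "\<forall>i. \<exists>N0::nat. \<forall>n. int N0 \<le> \<bar>n\<bar> \<longrightarrow> lo (g i n) M" using assms(2) unfolding dec_def by blast
  then obtain N0 where N0: "\<And>i n. int (N0 i) \<le> \<bar>n\<bar> \<Longrightarrow> lo (g i n) M" by metis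
  define N1 where "N1 = (\<Sum>i<I. N0 i)"
  have "lo (fls_suminf (\<lambda>i. g i n)) M" if "int N1 \<le> \<bar>n\<bar>" for n
  proof (rule suminf_lo[OF uvan_tends[OF assms(1)]])
    fix i show "lo (g i n) M"
    proof (cases "i < I")
      case True
      then have "N0 i \<le> N1" unfolding N1_def by (intro member_le_sum) auto
      then show ?thesis using that by (intro N0) auto
    qed (use I in auto)
  qed
  then show "\<exists>N0::nat. \<forall>n. int N0 \<le> \<bar>n\<bar> \<longrightarrow> lo (fls_suminf (\<lambda>i. g i n)) M" by blast
qed

lemma ev_suminf:
  assumes "uvan g" "\<And>i. dec (g i)"
  shows "tends (\<lambda>N. \<Sum>i<N. ev (g i)) (ev (\<lambda>n. fls_suminf (\<lambda>i. g i n)))"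
proof -
  have dsum: "dec (\<lambda>n. \<Sum>i<N. g i n)" for N
    by (induction N) (auto intro: dec_add assms(2) dec_fin[of 0])
  have "(\<Sum>i<N. ev (g i)) = ev (\<lambda>n. \<Sum>i<N. g i n)" for N
    by (induction N) (auto simp: ev_add assms(2) dsum ev_fin[where B=0] ssum_def)
  moreover have "tends (\<lambda>N. ev (\<lambda>n. \<Sum>i<N. g i n)) (ev (\<lambda>n. fls_suminf (\<lambda>i. g i n)))"
  proof (rule ev_limit[OF dsum uvan_dec_suminf[OF assms]])
    show "uvan (\<lambda>N n. (\<Sum>i<N. g i n) - fls_suminf (\<lambda>i. g i n))"
      unfolding uvan_def
    proof
      fix M
      from assms(1) obtain I where I: "\<And>i n. i \<ge> I \<Longrightarrow> lo (g i n) M"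
        unfolding uvan_def eventually_sequentially by blast
      have "lo ((\<Sum>i<N. g i n) - fls_suminf (\<lambda>i. g i n)) M" if "N \<ge> I" for N n
        using tail_lo[OF uvan_tends[OF assms(1), of n], of N M] I that by (simp add: lo_swap)
      then show "eventually (\<lambda>N. \<forall>n. lo ((\<Sum>i<N. g i n) - fls_suminf (\<lambda>i. g i n)) M) sequentially"
        unfolding eventually_sequentially by blast
    qed
  qed
  ultimately show ?thesis by simp
qed

lemma vmul: "vv powi a * vv powi b = vv powi (a + b)"
  by (simp add: vpow_add)

lemma vmul': "vv powi a * (vv powi b * z) = vv powi (a + b) * z"
  by (simp add: vpow_add mult.assoc)

lemma vv_powi_nz [simp]: "vv powi a \<noteq> 0"
  by (simp add: power_int_not_zero)

lemma vv_eq: "vv = vv powi 1" by simp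

lemma inv_vv: "inverse vv = vv powi (-1)"
  by (simp only: power_int_minus power_int_1_right)

definition qn :: "int \<Rightarrow> vser" where "qn j = vv powi j - vv powi (- j)"

definition dv :: vser where "dv = vv - inverse vv"

lemma dv_eq: "dv = qn 1" by (simp only: dv_def qn_def inv_vv power_int_1_right)

lemma qn_nz: "j \<noteq> 0 \<Longrightarrow> qn j \<noteq> 0"
proof
  assume "j \<noteq> 0" "qn j = 0"
  then have "vv powi j = vv powi (-j)" by (simp add: qn_def)
  then have "fls_subdegree (vv powi j) = fls_subdegree (vv powi (-j))" by simp
  then show False using \<open>j \<noteq> 0\<close> by (simp add: vv_def)
qed

lemma dv_nz [simp]: "dv \<noteq> 0" by (simp add: dv_eq qn_nz)

lemma qn_0 [simp]: "qn 0 = 0" by (simp add: qn_def)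

lemma qint_qn: "qint n = qn (int n) / dv"
  by (simp add: qint_def qn_def dv_def power_int_minus power_inverse)

lemma qint_nz: "n \<noteq> 0 \<Longrightarrow> qint n \<noteq> 0"
  by (simp add: qint_qn qn_nz)

lemma qn_add1: "qn (x + y) = vv powi y * qn x + vv powi (- x) * qn y"
  by (simp add: qn_def algebra_simps vmul)

lemma qn_add2: "qn (x + y) = vv powi (- y) * qn x + vv powi x * qn y"
  by (simp add: qn_def algebra_simps vmul)

lemma qfact_nz: "qfact k \<noteq> 0"
  unfolding qfact_def by (auto simp: qint_nz)

lemma qfact_Suc: "qfact (Suc k) = qfact k * qint (Suc k)"
  unfolding qfact_def by (simp add: prod.nat_ivl_Suc')

section \<open>Symmetric q-binomials\<close>

lemma qbinom_0 [simp]: "qbinom n 0 = 1"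
  by (simp add: qbinom_def qfact_def)

lemma qbinom_R: "qbinom a (Suc m) * qint (Suc m) = qint (a - m) * qbinom a m"
  unfolding qbinom_def using qfact_nz[of m] qint_nz[of "Suc m"]
  by (simp add: qfact_Suc field_simps)

lemma qbinom_A: "qbinom (Suc a) (Suc m) * qint (Suc m) = qint (Suc a) * qbinom a m"
proof -
  have "(\<Prod>j<Suc m. qint (Suc a - j)) = qint (Suc a - 0) * (\<Prod>j<m. qint (Suc a - Suc j))"
    by (rule prod.lessThan_Suc_shift)
  then have h: "(\<Prod>j<Suc m. qint (Suc a - j)) = qint (Suc a) * (\<Prod>j<m. qint (a - j))"
    by simp
  have nz: "qfact m \<noteq> 0" "qint (Suc m) \<noteq> 0" using qfact_nz qint_nz by auto
  show ?thesis
    unfolding qbinom_def h qfact_Suc using nz by (simp add: field_simps)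
qed

lemma qbinom_above: "n < k \<Longrightarrow> qbinom n k = 0"
proof (induction k)
  case (Suc k)
  show ?case
  proof (cases "n = k")
    case True
    then have "qbinom n (Suc k) * qint (Suc k) = 0" using qbinom_R[of n k] by (simp add: qint_def)
    then show ?thesis using qint_nz[of "Suc k"] by simp
  next
    case False
    then have "qbinom n k = 0" using Suc by simp
    then have "qbinom n (Suc k) * qint (Suc k) = 0" using qbinom_R[of n k] by simp
    then show ?thesis using qint_nz[of "Suc k"] by simp
  qed
qed simp

lemma qbinom_diag [simp]: "qbinom n n = 1"
proof (induction n)
  case (Suc n)
  have "qbinom (Suc n) (Suc n) * qint (Suc n) = qint (Suc n)"
    using qbinom_A[of n n] Suc by simp
  then show ?case using qint_nz[of "Suc n"] by simp
qed simp

lemma qbinom_R': "qbinom a (Suc m) * qn (int m + 1) = qn (int a - int m) * qbinom a m"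
proof (cases "m \<le> a")
  case True
  then show ?thesis using qbinom_R[of a m] by (simp add: qint_qn of_nat_diff field_simps)
next
  case False
  then show ?thesis by (simp add: qbinom_above)
qed

lemma qbinom_A': "qbinom (Suc a) (Suc m) * qn (int m + 1) = qn (int a + 1) * qbinom a m"
  using qbinom_A[of a m] by (simp add: qint_qn field_simps)

lemma pascal1: "qbinom (Suc n) (Suc k) = vv powi (- (int k + 1)) * qbinom n (Suc k) + vv powi (int n - int k) * qbinom n k"
proof -
  define Q where "Q = qn (int k + 1)"
  have nz: "Q \<noteq> 0" by (simp add: qn_nz Q_def)
  have R: "qbinom n (Suc k) * Q = qn (int n - int k) * qbinom n k" unfolding Q_def by (rule qbinom_R')
  have "qbinom (Suc n) (Suc k) * Q = qn (int n + 1) * qbinom n k" unfolding Q_def by (rule qbinom_A')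
  also have "qn (int n + 1) = vv powi (- (int k + 1)) * qn (int n - int k) + vv powi (int n - int k) * Q"
    using qn_add2[of "int n - int k" "int k + 1"] by (simp add: Q_def)
  also have "(vv powi (- (int k + 1)) * qn (int n - int k) + vv powi (int n - int k) * Q) * qbinom n k
      = vv powi (- (int k + 1)) * (qn (int n - int k) * qbinom n k) + vv powi (int n - int k) * qbinom n k * Q"
    by (simp add: algebra_simps)
  also have "\<dots> = (vv powi (- (int k + 1)) * qbinom n (Suc k) + vv powi (int n - int k) * qbinom n k) * Q"
    by (simp only: R[symmetric]) (simp add: algebra_simps)
  finally show ?thesis using nz by simp
qed

lemma pascal2: "qbinom (Suc n) (Suc k) = vv powi (int k + 1) * qbinom n (Suc k) + vv powi (int k - int n) * qbinom n k"
proof -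
  define Q where "Q = qn (int k + 1)"
  have nz: "Q \<noteq> 0" by (simp add: qn_nz Q_def)
  have R: "qbinom n (Suc k) * Q = qn (int n - int k) * qbinom n k" unfolding Q_def by (rule qbinom_R')
  have "qbinom (Suc n) (Suc k) * Q = qn (int n + 1) * qbinom n k" unfolding Q_def by (rule qbinom_A')
  also have "qn (int n + 1) = vv powi (int k + 1) * qn (int n - int k) + vv powi (int k - int n) * Q"
    using qn_add1[of "int n - int k" "int k + 1"] by (simp add: Q_def)
  also have "(vv powi (int k + 1) * qn (int n - int k) + vv powi (int k - int n) * Q) * qbinom n k
      = vv powi (int k + 1) * (qn (int n - int k) * qbinom n k) + vv powi (int k - int n) * qbinom n k * Q"
    by (simp add: algebra_simps)
  also have "\<dots> = (vv powi (int k + 1) * qbinom n (Suc k) + vv powi (int k - int n) * qbinom n k) * Q"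
    by (simp only: R[symmetric]) (simp add: algebra_simps)
  finally show ?thesis using nz by simp
qed

lemma qbinom_lo: "lo (qbinom n k) (- int k * (int n - int k))"
proof (induction n arbitrary: k)
  case 0
  then show ?case by (cases k) (auto simp: qbinom_above)
next
  case (Suc n)
  show ?case
  proof (cases k)
    case 0
    then show ?thesis by simp
  next
    case (Suc k')
    show ?thesis
    proof (cases "k' \<le> n")
      case False
      then show ?thesis using Suc by (simp add: qbinom_above)
    next
      case True
      have a: "lo (vv powi (- (int k' + 1)) * qbinom n (Suc k')) (- (int k' + 1) + (- int (Suc k') * (int n - int (Suc k'))))"
        by (intro lo_mult Suc.IH) simp
      have b: "lo (vv powi (int n - int k') * qbinom n k') ((int n - int k') + (- int k' * (int n - int k')))"
        by (intro lo_mult Suc.IH) simp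
      have "lo (vv powi (- (int k' + 1)) * qbinom n (Suc k') + vv powi (int n - int k') * qbinom n k') (- int k * (int (Suc n) - int k))"
      proof (intro lo_add)
        show "lo (vv powi (- (int k' + 1)) * qbinom n (Suc k')) (- int k * (int (Suc n) - int k))"
          using a by (rule lo_mono) (simp add: Suc algebra_simps)
        show "lo (vv powi (int n - int k') * qbinom n k') (- int k * (int (Suc n) - int k))"
          using b by (rule lo_mono) (use True in \<open>simp add: Suc algebra_simps\<close>)
      qed
      then show ?thesis using pascal1[of n k'] Suc by simp
    qed
  qed
qed

lemma qbinom_I1:
  "qbinom (Suc (Suc n)) (Suc (Suc m)) + qbinom n (Suc (Suc m))
   = qbinom n m + (vv powi (int m + 2) + vv powi (- (int m + 2))) * qbinom (Suc n) (Suc (Suc m))"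
proof -
  define P where "P = qbinom n (Suc (Suc m))"
  define Q where "Q = qbinom n (Suc m)"
  define R where "R = qbinom n m"
  define X where "X = qbinom (Suc n) (Suc (Suc m))"
  define Y where "Y = qbinom (Suc n) (Suc m)"
  have e1: "qbinom (Suc (Suc n)) (Suc (Suc m)) = vv powi (- (int m + 2)) * X + vv powi (int n - int m) * Y"
    using pascal1[of "Suc n" "Suc m"] by (simp add: X_def Y_def add.commute)
  have e2: "Y = vv powi (int m + 1) * Q + vv powi (int m - int n) * R"
    using pascal2[of n m] by (simp add: Y_def Q_def R_def)
  have e3: "X = vv powi (- (int m + 2)) * P + vv powi (int n - int m - 1) * Q"
    using pascal1[of n "Suc m"] by (simp add: X_def P_def Q_def add.commute) (simp add: algebra_simps)
  have "vv powi (- (int m + 2)) * X + vv powi (int n - int m) * Y + P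
      = R + (vv powi (int m + 2) + vv powi (- (int m + 2))) * X"
  proof -
    have "vv powi (int n - int m) * Y = vv powi (int n + 1) * Q + R"
      unfolding e2 by (simp add: algebra_simps vmul vmul')
    moreover have "vv powi (int m + 2) * X = P + vv powi (int n + 1) * Q"
      unfolding e3 by (simp add: algebra_simps vmul vmul')
    ultimately show ?thesis by (simp add: algebra_simps)
  qed
  then show ?thesis unfolding e1 by (simp add: P_def R_def X_def)
qed

lemma qbinom_I2:
  "qbinom (K + i) (2 * K) * qn (2 * int i + 1)
   = qn (2 * int K + 1) * (vv powi (int i - int K) * qbinom (Suc (K + i)) (Suc (2 * K))
       + vv powi (- (int i + int K + 1)) * qbinom (K + i) (Suc (2 * K)))"
proof (cases "K \<le> i")
  case False
  then show ?thesis by (simp add: qbinom_above)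
next
  case True
  define B where "B = qbinom (K + i) (2 * K)"
  have A: "qbinom (Suc (K + i)) (Suc (2 * K)) * qn (2 * int K + 1) = qn (int K + int i + 1) * B"
    using qbinom_A'[of "K + i" "2 * K"] by (simp add: B_def)
  have R: "qbinom (K + i) (Suc (2 * K)) * qn (2 * int K + 1) = qn (int i - int K) * B"
    using qbinom_R'[of "K + i" "2 * K"] by (simp add: B_def)
  have "qn (2 * int K + 1) * (vv powi (int i - int K) * qbinom (Suc (K + i)) (Suc (2 * K))
       + vv powi (- (int i + int K + 1)) * qbinom (K + i) (Suc (2 * K)))
      = vv powi (int i - int K) * (qbinom (Suc (K + i)) (Suc (2 * K)) * qn (2 * int K + 1))
       + vv powi (- (int i + int K + 1)) * (qbinom (K + i) (Suc (2 * K)) * qn (2 * int K + 1))"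
    by (simp add: algebra_simps)
  also have "\<dots> = B * (vv powi (int i - int K) * qn (int K + int i + 1) + vv powi (- (int K + int i + 1)) * qn (int i - int K))"
    unfolding A R by (simp add: algebra_simps)
  also have "vv powi (int i - int K) * qn (int K + int i + 1) + vv powi (- (int K + int i + 1)) * qn (int i - int K)
      = qn (2 * int i + 1)"
    using qn_add1[of "int K + int i + 1" "int i - int K"] by simp
  finally show ?thesis by (simp add: B_def)
qed

definition Bi :: "nat \<Rightarrow> int \<Rightarrow> vser" where
  "Bi N K = (if K < 0 then 0 else qbinom N (nat K))"

lemma Bi_pascal1: "Bi (Suc N) (K + 1) = vv powi (- (K + 1)) * Bi N (K + 1) + vv powi (int N - K) * Bi N K"
proof (cases "K \<ge> 0")
  case True
  then obtain k where k: "K = int k" by (metis nonneg_eq_int)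
  have "nat (int k + 1) = Suc k" by simp
  then show ?thesis using pascal1[of N k] by (simp add: Bi_def k)
next
  case False
  then show ?thesis by (cases "K = -1") (auto simp: Bi_def)
qed

lemma Bi_pascal2: "Bi (Suc N) (K + 1) = vv powi (K + 1) * Bi N (K + 1) + vv powi (K - int N) * Bi N K"
proof (cases "K \<ge> 0")
  case True
  then obtain k where k: "K = int k" by (metis nonneg_eq_int)
  have "nat (int k + 1) = Suc k" by simp
  then show ?thesis using pascal2[of N k] by (simp add: Bi_def k)
next
  case False
  then show ?thesis by (cases "K = -1") (auto simp: Bi_def)
qed

lemma Bi_JTP3: "Bi (Suc (Suc N)) (K + 1) = Bi N (K - 1) + Bi N (K + 1) + (vv powi (int N + 1) + vv powi (- (int N + 1))) * Bi N K"
proof -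
  have e1: "Bi (Suc (Suc N)) (K + 1) = vv powi (- (K + 1)) * Bi (Suc N) (K + 1) + vv powi (int N + 1 - K) * Bi (Suc N) K"
    using Bi_pascal1[of "Suc N" K] by simp (simp add: algebra_simps)
  have e2: "Bi (Suc N) (K + 1) = vv powi (K + 1) * Bi N (K + 1) + vv powi (K - int N) * Bi N K"
    by (rule Bi_pascal2)
  have e3: "Bi (Suc N) K = vv powi K * Bi N K + vv powi (K - 1 - int N) * Bi N (K - 1)"
    using Bi_pascal2[of N "K - 1"] by simp
  have p1: "vv powi (- (K + 1)) * vv powi (K + 1) = 1" by (simp only: vmul) simp
  have p2: "vv powi (- (K + 1)) * vv powi (K - int N) = vv powi (- (int N + 1))" by (simp only: vmul) (simp add: algebra_simps)
  have p3: "vv powi (int N + 1 - K) * vv powi K = vv powi (int N + 1)" by (simp only: vmul) (simp add: algebra_simps)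
  have p4: "vv powi (int N + 1 - K) * vv powi (K - 1 - int N) = 1" by (simp only: vmul) simp
  have "Bi (Suc (Suc N)) (K + 1) = (vv powi (- (K + 1)) * vv powi (K + 1)) * Bi N (K + 1) + (vv powi (- (K + 1)) * vv powi (K - int N)) * Bi N K
      + (vv powi (int N + 1 - K) * vv powi K) * Bi N K + (vv powi (int N + 1 - K) * vv powi (K - 1 - int N)) * Bi N (K - 1)"
    unfolding e1 e2 e3 by (simp only: distrib_left mult.assoc add.assoc)
  also have "\<dots> = Bi N (K - 1) + Bi N (K + 1) + (vv powi (int N + 1) + vv powi (- (int N + 1))) * Bi N K"
    unfolding p1 p2 p3 p4 by (simp add: algebra_simps)
  finally show ?thesis .
qed

definition sg :: "int \<Rightarrow> vser" where "sg j = (if even j then 1 else -1)"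

definition ee :: "int \<Rightarrow> vser" where "ee j = sg j * vv powi (j * (j + 1))"

lemma sg_succ: "sg (j + 1) = - sg j" by (simp add: sg_def)

lemma sg_neg: "sg (- j - 1) = - sg j" by (simp add: sg_def)

lemma sg_nat: "sg (int k) = (-1) ^ k"
  by (simp add: sg_def even_of_nat)

lemma lo_sg [simp]: "lo (sg j) 0" by (simp add: sg_def)

lemma ee_succ: "ee (j + 1) = - (vv powi (2 * (j + 1)) * ee j)"
proof -
  have "(j + 1) * (j + 1 + 1) = 2 * (j + 1) + j * (j + 1)" by (simp add: algebra_simps)
  then show ?thesis unfolding ee_def sg_succ by (simp add: vpow_add)
qed

lemma ee_neg: "ee (- j - 1) = - ee j"
proof -
  have "(- j - 1) * (- j - 1 + 1) = j * (j + 1)" by (simp add: algebra_simps)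
  then show ?thesis unfolding ee_def sg_neg by simp
qed

lemma lo_ee: "lo (ee j) (j * (j + 1))"
  using lo_mult[OF lo_sg lo_vv_powi, of j "j * (j + 1)"] by (simp add: ee_def)

lemma ee_nat_eq:
  "(-1) ^ k * qq ^ (k * (k + 1) div 2) = ee (int k)"
proof -
  have "2 * (k * (k + 1) div 2) = k * (k + 1)" by simp
  then have "2 * int (k * (k + 1) div 2) = int k * (int k + 1)"
    by (metis of_nat_mult of_nat_numeral of_nat_add of_nat_1)
  then show ?thesis by (simp add: ee_def sg_nat qq_pow)
qed

section \<open>theta_i as a Laurent evaluation\<close>

definition th :: "nat \<Rightarrow> int \<Rightarrow> vser" where "th i n = ee (\<bar>n\<bar> + int i)"

lemma lo_th: "lo (th i n) ((\<bar>n\<bar> + int i) * (\<bar>n\<bar> + int i + 1))"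
  unfolding th_def by (rule lo_ee)

lemma lo_th': "lo (th i n) (\<bar>n\<bar> + int i * (int i + 1))"
proof (rule lo_mono[OF lo_th])
  have "0 \<le> \<bar>n\<bar> * \<bar>n\<bar>" "0 \<le> \<bar>n\<bar> * int i" by simp_all
  then show "\<bar>n\<bar> + int i * (int i + 1) \<le> (\<bar>n\<bar> + int i) * (\<bar>n\<bar> + int i + 1)"
    by (simp add: algebra_simps)
qed

lemma dec_th: "dec (th i)"
  by (rule dec_bound[OF lo_th'])

lemma sg_add: "sg (a + b) = sg a * sg b"
  by (simp add: sg_def)

lemma ee_mult: "ee (int a) * ee (int b) * qq ^ (a * b) = ee (int a + int b)"
proof -
  have exps: "int a * (int a + 1) + (int b * (int b + 1) + 2 * int (a * b)) = (int a + int b) * (int a + int b + 1)"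
    by (simp add: algebra_simps)
  have "ee (int a) * ee (int b) * qq ^ (a * b)
      = (sg (int a) * sg (int b)) * (vv powi (int a * (int a + 1)) * (vv powi (int b * (int b + 1)) * vv powi (2 * int (a * b))))"
    by (simp add: ee_def qq_pow mult_ac)
  also have "\<dots> = sg (int a + int b) * vv powi ((int a + int b) * (int a + int b + 1))"
    by (simp only: vmul sg_add exps)
  finally show ?thesis by (simp add: ee_def)
qed

lemma tit_eq: "theta_inner_term i n = ee (int (Suc n)) * qq ^ (Suc n * i) * (xp (int (Suc n)) + xp (- int (Suc n)))"
proof -
  have "theta_inner_term i n = (-1) ^ Suc n * qq ^ (Suc n * (Suc n + 1) div 2 + Suc n * i) * (xx ^ Suc n + xinv ^ Suc n)"
    by (simp only: theta_inner_term_def Let_def Suc_eq_plus1)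
  also have "\<dots> = ((-1) ^ Suc n * qq ^ (Suc n * (Suc n + 1) div 2)) * qq ^ (Suc n * i) * (xx ^ Suc n + xinv ^ Suc n)"
    by (simp only: power_add mult.assoc)
  also have "\<dots> = ee (int (Suc n)) * qq ^ (Suc n * i) * (xp (int (Suc n)) + xp (- int (Suc n)))"
    by (simp only: ee_nat_eq xx_power xinv_power)
  finally show ?thesis .
qed

lemma theta_term_eq:
  "ee (int i) * theta_inner_term i n = ee (int n + 1 + int i) * (xp (int n + 1) + xp (- (int n + 1)))"
proof -
  have "ee (int i) * theta_inner_term i n = (ee (int (Suc n)) * ee (int i) * qq ^ (Suc n * i)) * (xp (int (Suc n)) + xp (- int (Suc n)))"
    unfolding tit_eq by (simp add: mult_ac)
  also have "\<dots> = ee (int (Suc n) + int i) * (xp (int (Suc n)) + xp (- int (Suc n)))"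
    by (simp only: ee_mult)
  finally show ?thesis by (simp add: add_ac)
qed

lemma lo_theta_inner: "lo (theta_inner_term i n) (int n)"
proof -
  have "lo (theta_inner_term i n) (int (Suc n) * (int (Suc n) + 1) + 2 * int (Suc n * i) + 0)"
    unfolding tit_eq by (intro lo_mult lo_add lo_ee lo_qq_power lo_xp)
  then show ?thesis by (rule lo_mono) (simp add: algebra_simps)
qed

lemma summable_theta_inner: "tends (theta_inner_term i) 0"
  by (rule tends_zero_lo_linear[where c = 0]) (simp add: lo_theta_inner)

lemma ssum_th: "ssum (th i) N = ee (int i) * (1 + (\<Sum>n<N. theta_inner_term i n))"
proof (induction N)
  case 0
  then show ?case by (simp add: ssum_def th_def)
next
  case (Suc N)
  have h: "ee (int i) * theta_inner_term i N = ee (int N + 1 + int i) * xp (int N + 1) + ee (int N + 1 + int i) * xp (- int N - 1)"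
    using theta_term_eq[of i N] by (simp add: distrib_left)
  have th1: "th i (int N + 1) = ee (int N + 1 + int i)" and th2: "th i (- int N - 1) = ee (int N + 1 + int i)"
    by (simp_all add: th_def add_ac)
  show ?case unfolding ssum_Suc Suc.IH th1 th2 sum.lessThan_Suc distrib_left h
    by (simp add: algebra_simps)
qed

lemma theta_ev: "theta i = ev (th i)"
proof -
  have "tends (\<lambda>N. ee (int i) * (1 + (\<Sum>n<N. theta_inner_term i n)))
          (ee (int i) * (1 + fls_suminf (theta_inner_term i)))"
    by (intro tends_cmult tends_add tends_const suminf_tends summable_theta_inner)
  then have "tends (ssum (th i)) (theta i)"
    unfolding ssum_th theta_def ee_nat_eq .
  then show ?thesis using ev_tends[OF dec_th] tends_unique by blast
qed

lemma lo_theta: "lo (theta i) (int i * (int i + 1))"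
  unfolding theta_ev
  by (rule ev_lo[OF dec_th]) (rule lo_mono[OF lo_th'], simp)

lemma quad_ge: "0 \<le> int i * int i + x * int i + x * x"
proof -
  have sq: "0 \<le> int i * int i" "0 \<le> x * x" by simp_all
  show ?thesis
  proof (cases "x \<ge> 0")
    case True
    then have "0 \<le> x * int i" by simp
    then show ?thesis using sq by linarith
  next
    case False
    show ?thesis
    proof (cases "int i + x \<ge> 0")
      case True
      have "0 \<le> int i * (int i + x)" using True by simp
      then have "0 \<le> int i * int i + x * int i" by (simp add: algebra_simps)
      then show ?thesis using sq by linarith
    next
      case F2: False
      have "0 \<le> x * (x + int i)" using F2 False by (intro mult_nonpos_nonpos) auto
      then have "0 \<le> x * x + x * int i" by (simp add: algebra_simps)
      then show ?thesis using sq by linarith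
    qed
  qed
qed

lemma lo_binom_ee:
  "lo (qbinom (a + i) b * ee (m + int i))
     (int i + (m * (m + 1) - int b * (int a - int b) - (2 * m - int b) * (2 * m - int b)))"
proof -
  have "lo (qbinom (a + i) b * ee (m + int i)) (- int b * (int (a + i) - int b) + (m + int i) * (m + int i + 1))"
    by (intro lo_mult qbinom_lo lo_ee)
  then show ?thesis
  proof (rule lo_mono)
    have "0 \<le> int i * int i + (2 * m - int b) * int i + (2 * m - int b) * (2 * m - int b)"
      by (rule quad_ge)
    then show "int i + (m * (m + 1) - int b * (int a - int b) - (2 * m - int b) * (2 * m - int b))
        \<le> - int b * (int (a + i) - int b) + (m + int i) * (m + int i + 1)"
      by (simp add: algebra_simps)
  qed
qed

lemma tends_binom_ee: "tends (\<lambda>i. qbinom (a + i) b * ee (m + int i)) 0"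
  by (rule tends_zero_lo_linear[OF lo_binom_ee])

section \<open>The coefficients A_k(m)\<close>

definition bk :: "nat \<Rightarrow> nat \<Rightarrow> vser" where "bk k i = qbinom (k + i) (2 * k)"

definition Ac :: "nat \<Rightarrow> int \<Rightarrow> vser" where
  "Ac k m = fls_suminf (\<lambda>i. bk k i * ee (m + int i))"

lemma lo_Aterm: "lo (bk k i * ee (m + int i)) (int i + m + int k * int k + 2 * m * int k)"
proof -
  have "lo (bk k i * ee (m + int i)) (- int (2 * k) * (int (k + i) - int (2 * k)) + (m + int i) * (m + int i + 1))"
    unfolding bk_def by (intro lo_mult qbinom_lo lo_ee)
  then show ?thesis
  proof (rule lo_mono)
    have "0 \<le> (m + int i - int k) * (m + int i - int k)" by simp
    then show "int i + m + int k * int k + 2 * m * int k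
        \<le> - int (2 * k) * (int (k + i) - int (2 * k)) + (m + int i) * (m + int i + 1)"
      by (simp add: algebra_simps)
  qed
qed

lemma tends_Aterm: "tends (\<lambda>i. bk k i * ee (m + int i)) 0"
  by (rule tends_zero_lo_linear[where c = "m + int k * int k + 2 * m * int k"])
     (rule lo_mono[OF lo_Aterm], simp)

lemma lo_Ac: "lo (Ac k m) (m + int k * int k + 2 * m * int k)"
  unfolding Ac_def
  by (rule suminf_lo[OF tends_Aterm]) (rule lo_mono[OF lo_Aterm], simp)

lemma lo_Ac_abs: "lo (Ac k \<bar>n\<bar>) \<bar>n\<bar>"
  by (rule lo_mono[OF lo_Ac]) simp

lemma dec_Ac: "dec (\<lambda>n. Ac k \<bar>n\<bar>)"
  by (rule dec_bound[where C = 0]) (simp add: lo_Ac_abs)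

definition ck :: "nat \<Rightarrow> vser" where
  "ck k = vv powi (2 * int k + 2) + vv powi (- (2 * int k + 2))"

lemma Ac_gen: "Ac (Suc k) (m - 1) + Ac (Suc k) (m + 1) = Ac k m + ck k * Ac (Suc k) m"
proof -
  define f1 where "f1 i = bk (Suc k) i * ee (m - 1 + int i)" for i
  define f2 where "f2 i = qbinom (k + i) (Suc (Suc (2 * k))) * ee (m + int i)" for i
  have t1: "tends f1 0" unfolding f1_def by (rule tends_Aterm)
  have t2: "tends f2 0" unfolding f2_def by (rule tends_binom_ee)
  have "Ac (Suc k) (m - 1) = fls_suminf f1" unfolding Ac_def f1_def ..
  also have "\<dots> = fls_suminf (\<lambda>i. f1 (Suc i))"
    using suminf_shift1[OF t1] by (simp add: f1_def bk_def qbinom_above)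
  also have "(\<lambda>i. f1 (Suc i)) = (\<lambda>i. qbinom (Suc (Suc (k + i))) (Suc (Suc (2 * k))) * ee (m + int i))"
    by (auto simp: f1_def bk_def algebra_simps)
  finally have e1: "Ac (Suc k) (m - 1) = fls_suminf (\<lambda>i. qbinom (Suc (Suc (k + i))) (Suc (Suc (2 * k))) * ee (m + int i))" .
  have "fls_suminf f2 = fls_suminf (\<lambda>i. f2 (Suc i))"
    using suminf_shift1[OF t2] by (simp add: f2_def qbinom_above)
  also have "(\<lambda>i. f2 (Suc i)) = (\<lambda>i. bk (Suc k) i * ee (m + 1 + int i))"
    by (auto simp: f2_def bk_def algebra_simps)
  finally have e2: "Ac (Suc k) (m + 1) = fls_suminf f2" unfolding Ac_def by simp
  have e3: "Ac (Suc k) m = fls_suminf (\<lambda>i. qbinom (Suc (k + i)) (Suc (Suc (2 * k))) * ee (m + int i))"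
    unfolding Ac_def bk_def by (simp add: algebra_simps)
  have e4: "Ac k m = fls_suminf (\<lambda>i. qbinom (k + i) (2 * k) * ee (m + int i))"
    unfolding Ac_def bk_def ..
  have ta: "tends (\<lambda>i. qbinom (Suc (Suc (k + i))) (Suc (Suc (2 * k))) * ee (m + int i)) 0"
    using tends_binom_ee[of "k + 2" "2 * k + 2" m] by (simp add: add_ac)
  have tb: "tends (\<lambda>i. qbinom (Suc (k + i)) (Suc (Suc (2 * k))) * ee (m + int i)) 0"
    using tends_binom_ee[of "k + 1" "2 * k + 2" m] by (simp add: add_ac)
  have tc: "tends (\<lambda>i. qbinom (k + i) (2 * k) * ee (m + int i)) 0"
    by (rule tends_binom_ee)
  have "Ac (Suc k) (m - 1) + Ac (Suc k) (m + 1)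
      = fls_suminf (\<lambda>i. qbinom (Suc (Suc (k + i))) (Suc (Suc (2 * k))) * ee (m + int i) + f2 i)"
    unfolding e1 e2 by (rule suminf_add[OF ta t2, symmetric])
  also have "\<dots> = fls_suminf (\<lambda>i. qbinom (k + i) (2 * k) * ee (m + int i) + ck k * (qbinom (Suc (k + i)) (Suc (Suc (2 * k))) * ee (m + int i)))"
  proof -
    have "qbinom (Suc (Suc (k + i))) (Suc (Suc (2 * k))) * ee (m + int i) + f2 i
        = qbinom (k + i) (2 * k) * ee (m + int i) + ck k * (qbinom (Suc (k + i)) (Suc (Suc (2 * k))) * ee (m + int i))" for i
    proof -
      have "qbinom (Suc (Suc (k + i))) (Suc (Suc (2 * k))) + qbinom (k + i) (Suc (Suc (2 * k)))
          = qbinom (k + i) (2 * k) + ck k * qbinom (Suc (k + i)) (Suc (Suc (2 * k)))"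
        using qbinom_I1[of "k + i" "2 * k"] by (simp add: ck_def add_ac)
      then have "(qbinom (Suc (Suc (k + i))) (Suc (Suc (2 * k))) + qbinom (k + i) (Suc (Suc (2 * k)))) * ee (m + int i)
          = (qbinom (k + i) (2 * k) + ck k * qbinom (Suc (k + i)) (Suc (Suc (2 * k)))) * ee (m + int i)" by simp
      then show ?thesis unfolding f2_def by (simp only: distrib_right mult.assoc)
    qed
    then show ?thesis by simp
  qed
  also have "\<dots> = Ac k m + ck k * Ac (Suc k) m"
    unfolding e3 e4 by (simp add: suminf_add tc tends_zero_cmult tb suminf_cmult)
  finally show ?thesis .
qed


lemma lo_qn: "lo (qn j) (- \<bar>j\<bar>)"
  unfolding qn_def by (intro lo_diff; rule lo_mono[OF lo_vv_powi]; simp)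

lemma ee_two_steps: "ee (int i + 1) = vv powi (4 * int i + 2) * ee (int i - 1)"
proof -
  have a: "ee (int i + 1) = - (vv powi (2 * (int i + 1)) * ee (int i))" by (rule ee_succ)
  have b: "ee (int i) = - (vv powi (2 * int i) * ee (int i - 1))"
    using ee_succ[of "int i - 1"] by simp
  have "ee (int i + 1) = (vv powi (2 * (int i + 1)) * vv powi (2 * int i)) * ee (int i - 1)"
    unfolding a b by simp
  also have "vv powi (2 * (int i + 1)) * vv powi (2 * int i) = vv powi (4 * int i + 2)"
    by (simp only: vmul) (simp add: algebra_simps)
  finally show ?thesis .
qed

lemma ee_diff_eq: "ee (1 + int i) - ee (- 1 + int i) = ee (int i - 1) * (vv powi (2 * int i + 1) * qn (2 * int i + 1))"
proof -
  have h: "vv powi (4 * int i + 2) = 1 + vv powi (2 * int i + 1) * qn (2 * int i + 1)"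
    unfolding qn_def by (simp add: algebra_simps vmul)
  have e1: "ee (1 + int i) = ee (int i + 1)" and e2: "ee (- 1 + int i) = ee (int i - 1)"
    by (simp_all add: add.commute)
  show ?thesis unfolding e1 e2 ee_two_steps h by (simp add: algebra_simps)
qed

lemma Ac_sym: "Ac (Suc k) (-1) = Ac (Suc k) 1"
proof -
  define K where "K = Suc k"
  define t where "t i = - (qn (2 * int K + 1) * ee (int i - 1) * vv powi (int i - int K) * qbinom (i + K) (Suc (2 * K)))" for i
  define tm where "tm i = bk K i * (ee (1 + int i) - ee (- 1 + int i))" for i
  have step: "tm i = t (Suc i) - t i" for i
  proof -
    have I2: "bk K i * qn (2 * int i + 1) = qn (2 * int K + 1) * (vv powi (int i - int K) * qbinom (Suc (K + i)) (Suc (2 * K))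
       + vv powi (- (int i + int K + 1)) * qbinom (K + i) (Suc (2 * K)))"
      unfolding bk_def by (rule qbinom_I2)
    have b: "ee (int i) = - (vv powi (2 * int i) * ee (int i - 1))"
      using ee_succ[of "int i - 1"] by simp
    have "tm i = ee (int i - 1) * vv powi (2 * int i + 1) * (bk K i * qn (2 * int i + 1))"
      unfolding tm_def ee_diff_eq by (simp add: algebra_simps)
    also have "\<dots> = qn (2 * int K + 1) * ee (int i - 1) * ((vv powi (2 * int i + 1) * vv powi (int i - int K)) * qbinom (Suc (K + i)) (Suc (2 * K))
       + (vv powi (2 * int i + 1) * vv powi (- (int i + int K + 1))) * qbinom (K + i) (Suc (2 * K)))"
      unfolding I2 by (simp add: algebra_simps)
    also have "\<dots> = qn (2 * int K + 1) * ee (int i - 1) * (vv powi (3 * int i + 1 - int K) * qbinom (Suc (K + i)) (Suc (2 * K))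
       + vv powi (int i - int K) * qbinom (K + i) (Suc (2 * K)))"
      by (simp only: vmul) (simp add: algebra_simps)
    also have "\<dots> = t (Suc i) - t i"
    proof -
      have "t (Suc i) = qn (2 * int K + 1) * ee (int i - 1) * ((vv powi (2 * int i) * vv powi (int i + 1 - int K)) * qbinom (Suc (K + i)) (Suc (2 * K)))"
        unfolding t_def by (simp add: b algebra_simps)
      also have "vv powi (2 * int i) * vv powi (int i + 1 - int K) = vv powi (3 * int i + 1 - int K)"
        by (simp only: vmul) (simp add: algebra_simps)
      finally show ?thesis unfolding t_def by (simp add: algebra_simps)
    qed
    finally show ?thesis .
  qed
  have t0: "t 0 = 0" unfolding t_def by (simp add: qbinom_above)
  have sums: "(\<Sum>i<N. tm i) = t N" for N
    using sum_lessThan_telescope[of t N] t0 by (simp add: step)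
  have lo_t: "lo (t N) (int N + (- (2 * int K + 1) - int K - (2 * int K + 1) * (- int K - 1) - (2 * int K + 2) * (2 * int K + 2)))" for N
  proof -
    have "lo (t N) (- \<bar>2 * int K + 1\<bar> + (int N - 1) * (int N - 1 + 1) + (int N - int K) + (- int (Suc (2 * K)) * (int (N + K) - int (Suc (2 * K)))))"
      unfolding t_def lo_uminus by (intro lo_mult lo_qn lo_ee lo_vv_powi qbinom_lo)
    then show ?thesis
    proof (rule lo_mono)
      have q: "0 \<le> int N * int N + (- (2 * int K + 2)) * int N + (- (2 * int K + 2)) * (- (2 * int K + 2))"
        by (rule quad_ge)
      show "int N + (- (2 * int K + 1) - int K - (2 * int K + 1) * (- int K - 1) - (2 * int K + 2) * (2 * int K + 2))
        \<le> - \<bar>2 * int K + 1\<bar> + (int N - 1) * (int N - 1 + 1) + (int N - int K) + (- int (Suc (2 * K)) * (int (N + K) - int (Suc (2 * K))))"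
        using q by (simp add: algebra_simps)
    qed
  qed
  have tt: "tends t 0" by (rule tends_zero_lo_linear[OF lo_t])
  have "fls_suminf tm = 0"
    by (rule tends_suminf) (simp add: sums tt)
  moreover have "fls_suminf tm = Ac K 1 - Ac K (-1)"
  proof -
    have ta: "tends (\<lambda>i. bk K i * ee (1 + int i)) 0" and tb: "tends (\<lambda>i. bk K i * ee (- 1 + int i)) 0"
      by (rule tends_Aterm)+
    have "tm = (\<lambda>i. bk K i * ee (1 + int i) - bk K i * ee (- 1 + int i))"
      unfolding tm_def by (simp add: right_diff_distrib)
    then show ?thesis unfolding Ac_def using suminf_diff[OF ta tb] by simp
  qed
  ultimately show ?thesis unfolding K_def by simp
qed

section \<open>The series S_k\<close>

definition Sk :: "nat \<Rightarrow> vser" where "Sk k = ev (\<lambda>n. Ac k \<bar>n\<bar>)"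

lemma Ac_abs_rec: "Ac (Suc k) \<bar>n - 1\<bar> + Ac (Suc k) \<bar>n + 1\<bar> = Ac k \<bar>n\<bar> + ck k * Ac (Suc k) \<bar>n\<bar>"
proof (cases "n > 0")
  case True
  then show ?thesis using Ac_gen[of k n] by simp
next
  case False
  show ?thesis
  proof (cases "n = 0")
    case True
    then show ?thesis using Ac_gen[of k 0] Ac_sym[of k] by simp
  next
    case F2: False
    then have "\<bar>n - 1\<bar> = - n + 1" "\<bar>n + 1\<bar> = - n - 1" "\<bar>n\<bar> = - n" using False by auto
    then show ?thesis using Ac_gen[of k "- n"] by (simp add: add.commute)
  qed
qed

lemma S_rec: "(xx + xinv) * Sk (Suc k) = Sk k + ck k * Sk (Suc k)"
proof -
  let ?a = "\<lambda>n. Ac (Suc k) \<bar>n\<bar>"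
  have d: "dec ?a" by (rule dec_Ac)
  have d1: "dec (\<lambda>n. ?a (n - 1))" using dec_shift[OF d, of "-1"] by simp
  have d2: "dec (\<lambda>n. ?a (n + 1))" using dec_shift[OF d, of 1] by simp
  have "(xx + xinv) * Sk (Suc k) = ev (\<lambda>n. ?a (n - 1)) + ev (\<lambda>n. ?a (n + 1))"
    unfolding Sk_def distrib_right ev_shift[OF d] ev_shift'[OF d] ..
  also have "\<dots> = ev (\<lambda>n. ?a (n - 1) + ?a (n + 1))" by (rule ev_add[OF d1 d2, symmetric])
  also have "\<dots> = ev (\<lambda>n. Ac k \<bar>n\<bar> + ck k * ?a n)" by (simp only: Ac_abs_rec)
  also have "\<dots> = Sk k + ck k * Sk (Suc k)"
    unfolding Sk_def by (simp add: ev_add ev_cmult dec_Ac dec_cmult)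
  finally show ?thesis .
qed

lemma uvan_lo: "(\<And>i n. lo (g i n) (int i + c)) \<Longrightarrow> uvan g"
  unfolding uvan_def
proof
  fix M assume a: "\<And>i n. lo (g i n) (int i + c)"
  show "eventually (\<lambda>i. \<forall>n. lo (g i n) M) sequentially"
    unfolding eventually_sequentially
    by (intro exI[of _ "nat (M - c)"]) (auto intro: lo_mono[OF a])
qed

lemma S_series: "tends (\<lambda>N. \<Sum>i<N. bk k i * theta i) (Sk k)"
proof -
  define g where "g i n = bk k i * th i n" for i n
  have u: "uvan g"
  proof (rule uvan_lo[where c = 0])
    fix i n show "lo (g i n) (int i + 0)"
      unfolding g_def th_def using lo_Aterm[of k i "\<bar>n\<bar>"]
      by (rule lo_mono) simp
  qed
  have d: "dec (g i)" for i unfolding g_def by (intro dec_cmult dec_th)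
  have "tends (\<lambda>N. \<Sum>i<N. ev (g i)) (ev (\<lambda>n. fls_suminf (\<lambda>i. g i n)))"
    by (rule ev_suminf[OF u d])
  moreover have "ev (g i) = bk k i * theta i" for i
    unfolding g_def theta_ev by (simp add: ev_cmult dec_th)
  moreover have "(\<lambda>n. fls_suminf (\<lambda>i. g i n)) = (\<lambda>n. Ac k \<bar>n\<bar>)"
    unfolding g_def th_def Ac_def by (simp add: add.commute)
  ultimately show ?thesis unfolding Sk_def by simp
qed

lemma one_minus_nz: "lo f 1 \<Longrightarrow> 1 - f \<noteq> 0"
proof
  assume "lo f 1" "1 - f = 0"
  then have "fls_nth (1 - f) 0 = 0" by simp
  moreover have "fls_nth f 0 = 0" using \<open>lo f 1\<close> by (simp add: lo_def)
  ultimately show False by simp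
qed

lemma xvar_ne1: "xvar \<noteq> 1"
  by (simp add: xvar_def One_fract_def eq_fract one_pCons)

lemma lo1_ne1: "lo f 1 \<Longrightarrow> f \<noteq> 1"
  using one_minus_nz by force

lemma one_minus_xx_nz: "1 - xx \<noteq> 0"
proof
  assume "1 - xx = 0"
  then have "fls_nth (1 - xx) 0 = 0" by simp
  then show False using xvar_ne1 by (simp add: xx_def)
qed

lemma xx_ne1: "xx \<noteq> 1" using one_minus_xx_nz by force

lemma lo_xx [simp]: "lo xx 0" by (simp add: xx_def)
lemma lo_xinv [simp]: "lo xinv 0" by (simp add: xinv_def)

lemma qpoch_Suc: "qpoch a (Suc n) = qpoch a n * (1 - a * qq ^ n)"
  by (simp add: qpoch_def)

lemma qpoch_0 [simp]: "qpoch a 0 = 1" by (simp add: qpoch_def)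

lemma qpoch_nz_pos: "lo a 1 \<Longrightarrow> qpoch a n \<noteq> 0"
proof (induction n)
  case (Suc n)
  have "lo (a * qq ^ n) (1 + 2 * int n)" by (intro lo_mult Suc.prems lo_qq_power)
  then have "lo (a * qq ^ n) 1" by (rule lo_mono) simp
  then show ?case using Suc by (simp add: qpoch_Suc lo1_ne1)
qed simp

lemma qpoch_xx_nz: "qpoch xx n \<noteq> 0"
proof (induction n)
  case (Suc n)
  show ?case
  proof (cases n)
    case 0
    then show ?thesis by (simp add: qpoch_Suc xx_ne1)
  next
    case (Suc m)
    have "lo (xx * qq ^ n) (0 + 2 * int n)" by (intro lo_mult lo_xx lo_qq_power)
    then have "lo (xx * qq ^ n) 1" by (rule lo_mono) (simp add: Suc)
    then show ?thesis using \<open>qpoch xx n \<noteq> 0\<close> by (simp add: qpoch_Suc lo1_ne1)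
  qed
qed simp

lemma lo_qq [simp]: "lo qq 2" using lo_qq_power[of 1] by simp

lemma lo_qqxinv: "lo (qq * xinv) 1"
proof -
  have "lo (qq * xinv) (2 + 0)" by (intro lo_mult) simp_all
  then show ?thesis by (rule lo_mono) simp
qed

lemma lo_qq1: "lo qq 1" by (rule lo_mono[OF lo_qq]) simp

definition W :: "nat \<Rightarrow> vser" where "W k = qpoch xx (k + 1) * qpoch (qq * xinv) k"

lemma W_nz: "W k \<noteq> 0"
  unfolding W_def using qpoch_xx_nz qpoch_nz_pos[OF lo_qqxinv] by simp

lemma W_0: "W 0 = 1 - xx" by (simp add: W_def qpoch_def)

lemma W_Suc: "W (Suc k) = W k * (- (vv powi (2 * int k + 2))) * ((xx + xinv) - ck k)"
proof -
  have "W (Suc k) = W k * ((1 - xx * qq ^ (k + 1)) * (1 - qq * xinv * qq ^ k))"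
    unfolding W_def by (simp add: qpoch_Suc algebra_simps)
  also have "(1 - xx * qq ^ (k + 1)) * (1 - qq * xinv * qq ^ k) = (- (vv powi (2 * int k + 2))) * ((xx + xinv) - ck k)"
  proof -
    have q1: "qq * qq ^ k = vv powi (2 * int k + 2)" using qq_pow[of "Suc k"] by (simp add: algebra_simps)
    have q2: "qq ^ (k + 1) = vv powi (2 * int k + 2)" using qq_pow[of "Suc k"] by (simp add: algebra_simps)
    have "(1 - xx * qq ^ (k + 1)) * (1 - qq * xinv * qq ^ k)
        = 1 - xx * vv powi (2 * int k + 2) - xinv * vv powi (2 * int k + 2) + (xx * xinv) * (vv powi (2 * int k + 2) * vv powi (2 * int k + 2))"
    proof -
      have "qq * xinv * qq ^ k = xinv * (qq * qq ^ k)" by (simp add: mult_ac)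
      then have h2: "qq * xinv * qq ^ k = xinv * vv powi (2 * int k + 2)" by (simp only: q1)
      show ?thesis unfolding q2 h2 by (simp add: algebra_simps)
    qed
    also have "\<dots> = (- (vv powi (2 * int k + 2))) * ((xx + xinv) - ck k)"
      unfolding xx_xinv ck_def by (simp add: algebra_simps vmul)
    finally show ?thesis .
  qed
  finally show ?thesis by (simp add: mult.assoc)
qed

lemma W_S: "W k * Sk k = ee (int k) * ((1 - xx) * Sk 0)"
proof (induction k)
  case 0
  then show ?case by (simp add: W_0 ee_def sg_def)
next
  case (Suc k)
  have "W (Suc k) * Sk (Suc k) = W k * (- (vv powi (2 * int k + 2))) * ((xx + xinv) * Sk (Suc k) - ck k * Sk (Suc k))"
    unfolding W_Suc by (simp add: algebra_simps)
  also have "(xx + xinv) * Sk (Suc k) - ck k * Sk (Suc k) = Sk k"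
    using S_rec[of k] by simp
  also have "W k * (- (vv powi (2 * int k + 2))) * Sk k = - (vv powi (2 * int k + 2) * (W k * Sk k))"
    by (simp add: algebra_simps)
  also have "\<dots> = ee (int (Suc k)) * ((1 - xx) * Sk 0)"
    unfolding Suc.IH using ee_succ[of "int k"] by (simp add: algebra_simps)
  finally show ?case .
qed

lemma sigma_tilde_eq: "sigma_tilde k = ee (int k) / W k"
  unfolding sigma_tilde_def W_def ee_nat_eq[symmetric] by simp

lemma Sk_sigma: "Sk k = sigma_tilde k * ((1 - xx) * Sk 0)"
  using W_S[of k] W_nz[of k] unfolding sigma_tilde_eq by (simp add: field_simps)

lemma Ac0_step: "Ac 0 (m + 1) = Ac 0 m - ee m"
proof -
  have t: "tends (\<lambda>i. ee (m + int i)) 0"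
    using tends_Aterm[of 0 m] by (simp add: bk_def)
  have "Ac 0 (m + 1) = fls_suminf (\<lambda>i. ee (m + int (Suc i)))"
    unfolding Ac_def bk_def by (simp add: add_ac)
  also have "\<dots> = fls_suminf (\<lambda>i. ee (m + int i)) - ee m"
    using suminf_shift1[OF t] by simp
  also have "fls_suminf (\<lambda>i. ee (m + int i)) = Ac 0 m"
    unfolding Ac_def bk_def by simp
  finally show ?thesis .
qed

lemma base_coeff: "Ac 0 \<bar>n\<bar> - Ac 0 \<bar>n - 1\<bar> = ee (- n)"
proof (cases "n \<ge> 1")
  case True
  then have "\<bar>n\<bar> = (n - 1) + 1" "\<bar>n - 1\<bar> = n - 1" by auto
  then show ?thesis using Ac0_step[of "n - 1"] ee_neg[of "n - 1"] by simp
next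
  case False
  then have "\<bar>n - 1\<bar> = - n + 1" "\<bar>n\<bar> = - n" by auto
  then show ?thesis using Ac0_step[of "- n"] by simp
qed

lemma base: "(1 - xx) * Sk 0 = ev (\<lambda>n. ee (- n))"
proof -
  let ?a = "\<lambda>n. Ac 0 \<bar>n\<bar>"
  have d: "dec ?a" by (rule dec_Ac)
  have d1: "dec (\<lambda>n. ?a (n - 1))" using dec_shift[OF d, of "-1"] by simp
  have "(1 - xx) * Sk 0 = ev ?a - ev (\<lambda>n. ?a (n - 1))"
    unfolding Sk_def ev_shift[OF d] by (simp add: algebra_simps)
  also have "\<dots> = ev (\<lambda>n. ?a n - ?a (n - 1))" by (rule ev_diff[OF d d1, symmetric])
  also have "\<dots> = ev (\<lambda>n. ee (- n))" by (simp only: base_coeff)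
  finally show ?thesis .
qed

lemma conv_of_diff:
  assumes "tends (\<lambda>n. s (Suc n) - s n) 0"
  shows "tends s (fls_lim s)"
proof -
  obtain S where S: "tends (\<lambda>N. \<Sum>k<N. s (Suc k) - s k) S" using summable_crit[OF assms] by blast
  have "(\<Sum>k<N. s (Suc k) - s k) + s 0 = s N" for N by (simp add: sum_lessThan_telescope)
  then have "tends s (S + s 0)" using tends_add[OF S tends_const[of "s 0"]] by simp
  then show ?thesis using tends_lim by metis
qed

lemma lo_qpoch: "lo a 0 \<Longrightarrow> lo (qpoch a n) 0"
  unfolding qpoch_def
proof (intro lo_prod)
  fix j assume "lo a 0"
  then have "lo (a * qq ^ j) (0 + 2 * int j)" by (intro lo_mult lo_qq_power)
  then have "lo (a * qq ^ j) 0" by (rule lo_mono) simp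
  then show "lo (1 - a * qq ^ j) 0" by (intro lo_diff) simp_all
qed

lemma qpoch_diff_lo:
  assumes "lo a L" "0 \<le> L"
  shows "lo (qpoch a (Suc n) - qpoch a n) (L + 2 * int n)"
proof -
  have "qpoch a (Suc n) - qpoch a n = - (qpoch a n * (a * qq ^ n))" by (simp add: qpoch_Suc algebra_simps)
  moreover have "lo (qpoch a n * (a * qq ^ n)) (0 + (L + 2 * int n))"
    using assms by (intro lo_mult lo_qpoch lo_qq_power) (auto intro: lo_mono)
  ultimately show ?thesis by simp
qed

lemma qpoch_tends:
  assumes "lo a L" "0 \<le> L"
  shows "tends (qpoch a) (qpoch_inf a)"
  unfolding qpoch_inf_def
proof (rule conv_of_diff)
  show "tends (\<lambda>n. qpoch a (Suc n) - qpoch a n) 0"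
    by (rule tends_zero_lo_linear[where c = L]) (rule lo_mono[OF qpoch_diff_lo[OF assms]], simp)
qed

lemma qpoch_tail:
  assumes "lo a L" "0 \<le> L"
  shows "lo (qpoch_inf a - qpoch a n) (L + 2 * int n)"
proof -
  have "lo (qpoch a (N + n) - qpoch a n) (L + 2 * int n)" for N
  proof (induction N)
    case (Suc N)
    have "lo (qpoch a (Suc (N + n)) - qpoch a (N + n)) (L + 2 * int (N + n))"
      by (rule qpoch_diff_lo[OF assms])
    then have "lo (qpoch a (Suc (N + n)) - qpoch a (N + n)) (L + 2 * int n)" by (rule lo_mono) simp
    then have "lo ((qpoch a (Suc (N + n)) - qpoch a (N + n)) + (qpoch a (N + n) - qpoch a n)) (L + 2 * int n)"
      using Suc by (intro lo_add)
    then show ?case by simp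
  qed simp
  then have "eventually (\<lambda>N. lo (qpoch a (N + n) - qpoch a n) (L + 2 * int n)) sequentially" by simp
  moreover have "tends (\<lambda>N. qpoch a (N + n) - qpoch a n) (qpoch_inf a - qpoch a n)"
    by (rule tends_diff[OF tends_shift[OF qpoch_tends[OF assms]] tends_const])
  ultimately show ?thesis using tends_lo by blast
qed

lemma lo_qq0 [simp]: "lo qq 0" by (rule lo_mono[OF lo_qq]) simp
lemma lo_qqxinv0 [simp]: "lo (qq * xinv) 0" by (rule lo_mono[OF lo_qqxinv]) simp

lemma tends_qq: "tends (qpoch qq) (qpoch_inf qq)" by (rule qpoch_tends[OF lo_qq]) simp
lemma tends_xx: "tends (qpoch xx) (qpoch_inf xx)" by (rule qpoch_tends[OF lo_xx]) simp
lemma tends_qqxinv: "tends (qpoch (qq * xinv)) (qpoch_inf (qq * xinv))" by (rule qpoch_tends[OF lo_qqxinv]) simp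

lemma qq_tail: "lo (qpoch_inf qq - qpoch qq n) (2 * int n + 2)"
  using qpoch_tail[OF lo_qq, of n] by (simp add: add.commute)

lemma lo_qpoch_inf: "lo a 0 \<Longrightarrow> lo (qpoch_inf a) 0"
  using qpoch_tail[of a 0 0] lo_qpoch[of a 0] lo_add by fastforce

lemma qpoch_minus1: "lo a 1 \<Longrightarrow> lo (qpoch a n - 1) 1"
proof (induction n)
  case (Suc n)
  have "qpoch a (Suc n) - 1 = (qpoch a n - 1) * (1 - a * qq ^ n) - a * qq ^ n"
    by (simp add: qpoch_Suc algebra_simps)
  moreover have "lo (a * qq ^ n) 1"
    using lo_mult[OF Suc.prems lo_qq_power[of n]] by (rule lo_mono) simp
  moreover have "lo (1 - a * qq ^ n) 0"
    using \<open>lo (a * qq ^ n) 1\<close> by (intro lo_diff) (auto intro: lo_mono)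
  ultimately show ?case using lo_mult[OF Suc.IH[OF Suc.prems] \<open>lo (1 - a * qq ^ n) 0\<close>]
    by (auto intro!: lo_diff)
qed simp

lemma subdeg0: "lo f 0 \<Longrightarrow> lo (f - 1) 1 \<Longrightarrow> fls_subdegree f = 0"
proof -
  assume a: "lo f 0" "lo (f - 1) 1"
  have "fls_nth (f - 1) 0 = 0" using a(2) unfolding lo_def by simp
  then have "fls_nth f 0 = 1" by simp
  then have "f \<noteq> 0" by auto
  then have "0 \<le> fls_subdegree f" using a(1) by (simp add: lo_iff)
  moreover have "fls_subdegree f \<le> 0" using \<open>fls_nth f 0 = 1\<close> by (intro fls_subdegree_leI) simp
  ultimately show ?thesis by simp
qed

lemma subdeg_qqpoch: "fls_subdegree (qpoch qq n) = 0"
  by (rule subdeg0[OF lo_qpoch[OF lo_qq0] qpoch_minus1[OF lo_qq1]])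

definition GG :: "nat \<Rightarrow> nat \<Rightarrow> vser" where
  "GG N K = vv powi (int K * (int N - int K)) * qbinom N K"

lemma qn_one_minus: "1 - vv powi (2 * j) = - (vv powi j * qn j)"
  unfolding qn_def by (simp add: algebra_simps vmul)

lemma qqpoch_Suc: "qpoch qq (Suc j) = qpoch qq j * (1 - vv powi (2 * int j + 2))"
proof -
  have "qq * qq ^ j = vv powi (2 * int j + 2)" using qq_pow[of "Suc j"] by (simp add: algebra_simps)
  then show ?thesis by (simp add: qpoch_Suc)
qed

lemma GG_row: "K < N \<Longrightarrow> GG N (Suc K) * (1 - vv powi (2 * int K + 2)) = GG N K * (1 - vv powi (2 * (int N - int K)))"
proof -
  assume "K < N"
  have R: "qbinom N (Suc K) * qn (int K + 1) = qn (int N - int K) * qbinom N K" by (rule qbinom_R')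
  have h1: "1 - vv powi (2 * int K + 2) = - (vv powi (int K + 1) * qn (int K + 1))"
    unfolding qn_def by (simp add: algebra_simps vmul)
  have h2: "1 - vv powi (2 * (int N - int K)) = - (vv powi (int N - int K) * qn (int N - int K))"
    unfolding qn_def by (simp add: algebra_simps vmul)
  have e1: "vv powi (int (Suc K) * (int N - int (Suc K))) * vv powi (int K + 1) = vv powi ((int K + 1) * (int N - int K))"
    by (simp only: vmul) (simp add: algebra_simps)
  have e2: "vv powi (int K * (int N - int K)) * vv powi (int N - int K) = vv powi ((int K + 1) * (int N - int K))"
    by (simp only: vmul) (simp add: algebra_simps)
  have "GG N (Suc K) * (1 - vv powi (2 * int K + 2))
      = - ((vv powi (int (Suc K) * (int N - int (Suc K))) * vv powi (int K + 1)) * (qbinom N (Suc K) * qn (int K + 1)))"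
    unfolding GG_def h1 by (simp only: mult_ac mult_minus_right mult_minus_left)
  also have "\<dots> = - (vv powi ((int K + 1) * (int N - int K)) * (qn (int N - int K) * qbinom N K))"
    unfolding e1 R ..
  also have "\<dots> = - ((vv powi (int K * (int N - int K)) * vv powi (int N - int K)) * (qn (int N - int K) * qbinom N K))"
    unfolding e2 ..
  also have "\<dots> = GG N K * (1 - vv powi (2 * (int N - int K)))"
    unfolding GG_def h2 by (simp only: mult_ac mult_minus_right mult_minus_left)
  finally show ?thesis .
qed

lemma GG_prod: "K \<le> N \<Longrightarrow> GG N K * qpoch qq K * qpoch qq (N - K) = qpoch qq N"
proof (induction K)
  case 0
  then show ?case by (simp add: GG_def)
next
  case (Suc K)
  then have KN: "K < N" by simp
  then have NK: "N - K = Suc (N - Suc K)" by simp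
  have "GG N (Suc K) * qpoch qq (Suc K) * qpoch qq (N - Suc K)
      = (GG N (Suc K) * (1 - vv powi (2 * int K + 2))) * qpoch qq K * qpoch qq (N - Suc K)"
    by (simp add: qqpoch_Suc algebra_simps)
  also have "\<dots> = GG N K * qpoch qq K * (qpoch qq (N - Suc K) * (1 - vv powi (2 * (int N - int K))))"
    unfolding GG_row[OF KN] by (simp add: algebra_simps)
  also have "qpoch qq (N - Suc K) * (1 - vv powi (2 * (int N - int K))) = qpoch qq (N - K)"
    unfolding NK qqpoch_Suc using KN by (simp add: of_nat_diff algebra_simps)
  finally show ?case using Suc KN by simp
qed

section \<open>Finite Jacobi triple product\<close>

definition cJ :: "nat \<Rightarrow> int \<Rightarrow> vser" where
  "cJ n m = sg m * vv powi (int n * int n - m) * Bi (2 * n) (int n + m)"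

lemma cJ_zero: "\<bar>m\<bar> > int n \<Longrightarrow> cJ n m = 0"
proof -
  assume a: "\<bar>m\<bar> > int n"
  show ?thesis
  proof (cases "m > 0")
    case True
    then have "nat (int n + m) > 2 * n" using a by auto
    then show ?thesis by (simp add: cJ_def Bi_def qbinom_above)
  next
    case False
    then show ?thesis using a by (simp add: cJ_def Bi_def)
  qed
qed

lemma dec_cJ: "dec (cJ n)"
  by (rule dec_fin[of "int n"]) (rule cJ_zero)

lemma cJ_rec: "cJ (Suc n) m = (1 + vv powi (4 * int n + 2)) * cJ n m - vv powi (2 * int n) * cJ n (m - 1) - vv powi (2 * int n + 2) * cJ n (m + 1)"
proof -
  define X where "X = Bi (2 * n) (int n + m - 1)"
  define Y where "Y = Bi (2 * n) (int n + m + 1)"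
  define Z where "Z = Bi (2 * n) (int n + m)"
  define P where "P = vv powi ((int n + 1) * (int n + 1) - m)"
  have J3: "Bi (2 * Suc n) (int (Suc n) + m) = X + Y + (vv powi (2 * int n + 1) + vv powi (- (2 * int n + 1))) * Z"
    using Bi_JTP3[of "2 * n" "int n + m"] by (simp add: X_def Y_def Z_def add_ac)
  have p1: "vv powi (2 * int n) * vv powi (int n * int n - (m - 1)) = P"
    unfolding P_def by (simp only: vmul) (simp add: algebra_simps)
  have p2: "vv powi (2 * int n + 2) * vv powi (int n * int n - (m + 1)) = P"
    unfolding P_def by (simp only: vmul) (simp add: algebra_simps)
  have p3: "(1 + vv powi (4 * int n + 2)) * vv powi (int n * int n - m) = P * (vv powi (2 * int n + 1) + vv powi (- (2 * int n + 1)))"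
    unfolding P_def by (simp only: distrib_left distrib_right vmul mult_1_left) (simp add: algebra_simps)
  have s1: "sg (m - 1) = - sg m" using sg_succ[of "m - 1"] by simp
  have s2: "sg (m + 1) = - sg m" by (rule sg_succ)
  have "cJ (Suc n) m = sg m * P * (X + Y + (vv powi (2 * int n + 1) + vv powi (- (2 * int n + 1))) * Z)"
    unfolding cJ_def J3 P_def by (simp add: add.commute)
  also have "\<dots> = sg m * ((1 + vv powi (4 * int n + 2)) * vv powi (int n * int n - m)) * Z
      + sg m * (vv powi (2 * int n) * vv powi (int n * int n - (m - 1))) * X
      + sg m * (vv powi (2 * int n + 2) * vv powi (int n * int n - (m + 1))) * Y"
    unfolding p1 p2 p3 by (simp add: algebra_simps)
  also have "\<dots> = (1 + vv powi (4 * int n + 2)) * cJ n m - vv powi (2 * int n) * cJ n (m - 1) - vv powi (2 * int n + 2) * cJ n (m + 1)"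
    unfolding cJ_def s1 s2 X_def Y_def Z_def by (simp add: algebra_simps)
  finally show ?thesis .
qed

definition FJ :: "nat \<Rightarrow> vser" where "FJ n = qpoch xx n * qpoch (qq * xinv) n"

lemma FJ_Suc: "FJ (Suc n) = FJ n * ((1 + vv powi (4 * int n + 2)) - vv powi (2 * int n) * xx - vv powi (2 * int n + 2) * xinv)"
proof -
  have q1: "qq ^ n = vv powi (2 * int n)" by (rule qq_pow)
  have q2: "qq * xinv * qq ^ n = vv powi (2 * int n + 2) * xinv"
  proof -
    have "qq * qq ^ n = vv powi (2 * int n + 2)" using qq_pow[of "Suc n"] by (simp add: algebra_simps)
    then show ?thesis by (metis mult.commute mult.left_commute)
  qed
  have "FJ (Suc n) = FJ n * ((1 - xx * qq ^ n) * (1 - qq * xinv * qq ^ n))"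
    unfolding FJ_def qpoch_Suc by (simp only: mult_ac)
  also have "(1 - xx * qq ^ n) * (1 - qq * xinv * qq ^ n) = 1 - vv powi (2 * int n) * xx - vv powi (2 * int n + 2) * xinv + (xx * xinv) * (vv powi (2 * int n) * vv powi (2 * int n + 2))"
    unfolding q2 unfolding q1 by (simp add: algebra_simps)
  also have "\<dots> = (1 + vv powi (4 * int n + 2)) - vv powi (2 * int n) * xx - vv powi (2 * int n + 2) * xinv"
    unfolding xx_xinv by (simp only: vmul mult_1_left) (simp add: algebra_simps)
  finally show ?thesis .
qed

lemma FJ_ev: "FJ n = ev (cJ n)"
proof (induction n)
  case 0
  have "cJ 0 = (\<lambda>m. if m = 0 then 1 else 0)"
    by (auto simp: cJ_def Bi_def fun_eq_iff sg_def qbinom_above)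
  then show ?case by (simp add: FJ_def ev_delta)
next
  case (Suc n)
  have d: "dec (cJ n)" by (rule dec_cJ)
  have d1: "dec (\<lambda>m. cJ n (m - 1))" using dec_shift[OF d, of "-1"] by simp
  have d2: "dec (\<lambda>m. cJ n (m + 1))" using dec_shift[OF d, of 1] by simp
  have "FJ (Suc n) = (1 + vv powi (4 * int n + 2)) * ev (cJ n) - vv powi (2 * int n) * (xx * ev (cJ n)) - vv powi (2 * int n + 2) * (xinv * ev (cJ n))"
    unfolding FJ_Suc Suc.IH by (simp add: algebra_simps)
  also have "\<dots> = ev (\<lambda>m. (1 + vv powi (4 * int n + 2)) * cJ n m) - ev (\<lambda>m. vv powi (2 * int n) * cJ n (m - 1)) - ev (\<lambda>m. vv powi (2 * int n + 2) * cJ n (m + 1))"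
    unfolding ev_shift[OF d, symmetric] ev_shift'[OF d, symmetric] by (simp add: ev_cmult d d1 d2)
  also have "\<dots> = ev (cJ (Suc n))"
    unfolding cJ_rec by (simp add: ev_diff ev_cmult dec_cmult dec_diff d d1 d2)
  finally show ?case .
qed

section \<open>Passing to the limit: the Jacobi triple product\<close>

abbreviation PQ :: vser where "PQ \<equiv> qpoch_inf qq"

lemma int_quad2: "0 \<le> (t - 1) * (t - (2::int))"
proof (cases "t \<le> 1")
  case True
  then show ?thesis by (intro mult_nonpos_nonpos) auto
next
  case False
  then show ?thesis by (intro mult_nonneg_nonneg) auto
qed

lemma lo_ee_neg: "lo (ee (- m)) (\<bar>m\<bar> * \<bar>m\<bar> - \<bar>m\<bar>)"
proof (rule lo_mono[OF lo_ee])
  have "\<bar>m\<bar> * \<bar>m\<bar> = m * m" by (simp add: abs_mult_self_eq)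
  moreover have "- m \<le> \<bar>m\<bar>" by simp
  ultimately show "\<bar>m\<bar> * \<bar>m\<bar> - \<bar>m\<bar> \<le> - m * (- m + 1)" by (simp add: algebra_simps)
qed

lemma dec_ee_neg: "dec (\<lambda>m. ee (- m))"
proof (rule dec_bound[where C = "-1"])
  fix n :: int
  have "0 \<le> (\<bar>n\<bar> - 1) * (\<bar>n\<bar> - 1)" by (rule zero_le_square)
  then have "\<bar>n\<bar> + -1 \<le> \<bar>n\<bar> * \<bar>n\<bar> - \<bar>n\<bar>" by (simp add: algebra_simps)
  then show "lo (ee (- n)) (\<bar>n\<bar> + -1)" by (rule lo_mono[OF lo_ee_neg])
qed

lemma cJ_eq:
  assumes "\<bar>m\<bar> \<le> int n"
  shows "cJ n m = ee (- m) * GG (2 * n) (nat (int n + m))"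
proof -
  have a: "int (nat (int n + m)) = int n + m" using assms by simp
  have b: "int (2 * n) - (int n + m) = int n - m" by simp
  have "sg (- m) = sg m" by (simp add: sg_def)
  moreover have "vv powi (int n * int n - m) = vv powi (- m * (- m + 1)) * vv powi ((int n + m) * (int n - m))"
    by (simp only: vmul) (simp add: algebra_simps)
  ultimately show ?thesis
    unfolding cJ_def ee_def GG_def Bi_def a b using assms by (simp add: algebra_simps)
qed

lemma PG_lo:
  assumes "a + b = N"
  shows "lo (PQ * GG N a - 1) (2 * int (min a b) + 2)"
proof -
  define D where "D = qpoch qq a * qpoch qq b"
  have sD: "fls_subdegree D = 0"
  proof -
    have "qpoch qq a \<noteq> 0" "qpoch qq b \<noteq> 0" using subdeg_qqpoch[of a] subdeg_qqpoch[of b]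
      by (auto simp: qpoch_nz_pos lo_qq1)
    then show ?thesis unfolding D_def by (simp add: subdeg_qqpoch)
  qed
  then have Dnz: "D \<noteq> 0" using qpoch_nz_pos[OF lo_qq1] unfolding D_def by simp
  have prod: "GG N a * D = qpoch qq N"
  proof -
    have "b = N - a" using assms by simp
    then show ?thesis using GG_prod[of a N] assms unfolding D_def by (simp add: mult.assoc)
  qed
  then have GGe: "GG N a = qpoch qq N * inverse D" using Dnz by (simp add: field_simps)
  let ?L = "2 * int (min a b) + 2"
  have t: "lo (PQ - qpoch qq j) ?L" if "min a b \<le> j" for j
    using qq_tail[of j] by (rule lo_mono) (use that in simp)
  have lP: "lo PQ 0" by (rule lo_qpoch_inf) simp
  have la: "lo (qpoch qq a) 0" by (rule lo_qpoch) simp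
  have num: "lo (PQ * qpoch qq N - D) ?L"
  proof -
    have "PQ * qpoch qq N - D = - (PQ * (PQ - qpoch qq N)) + PQ * (PQ - qpoch qq a) + qpoch qq a * (PQ - qpoch qq b)"
      unfolding D_def by (simp add: algebra_simps)
    moreover have "lo (PQ * (PQ - qpoch qq N)) (0 + ?L)" using assms by (intro lo_mult lP t) auto
    moreover have "lo (PQ * (PQ - qpoch qq a)) (0 + ?L)" by (intro lo_mult lP t) auto
    moreover have "lo (qpoch qq a * (PQ - qpoch qq b)) (0 + ?L)" by (intro lo_mult la t) auto
    ultimately show ?thesis by (auto intro!: lo_add lo_diff)
  qed
  have "PQ * GG N a - 1 = (PQ * qpoch qq N - D) * inverse D"
    unfolding GGe using Dnz by (simp add: field_simps)
  moreover have "lo ((PQ * qpoch qq N - D) * inverse D) (?L + 0)"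
    by (intro lo_mult num lo_inverse_unit sD)
  ultimately show ?thesis by simp
qed

lemma coef_lo: "lo (PQ * cJ n m - ee (- m)) (int n)"
proof (cases "\<bar>m\<bar> \<le> int n")
  case True
  define a where "a = nat (int n + m)"
  define b where "b = nat (int n - m)"
  have ab: "a + b = 2 * n" using True unfolding a_def b_def by auto
  have mn: "int (min a b) = int n - \<bar>m\<bar>" using True unfolding a_def b_def by auto
  have "PQ * cJ n m - ee (- m) = ee (- m) * (PQ * GG (2 * n) a - 1)"
    unfolding cJ_eq[OF True] a_def by (simp add: algebra_simps)
  moreover have "lo (ee (- m) * (PQ * GG (2 * n) a - 1)) ((\<bar>m\<bar> * \<bar>m\<bar> - \<bar>m\<bar>) + (2 * int (min a b) + 2))"
    by (intro lo_mult lo_ee_neg PG_lo ab)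
  moreover have "int n \<le> (\<bar>m\<bar> * \<bar>m\<bar> - \<bar>m\<bar>) + (2 * int (min a b) + 2)"
    using int_quad2[of "\<bar>m\<bar>"] unfolding mn using True by (simp add: algebra_simps)
  ultimately show ?thesis using lo_mono by auto
next
  case False
  then have "PQ * cJ n m - ee (- m) = - ee (- m)" by (simp add: cJ_zero)
  moreover have "int n \<le> \<bar>m\<bar> * \<bar>m\<bar> - \<bar>m\<bar>"
  proof -
    have "0 \<le> (\<bar>m\<bar> - 1) * (\<bar>m\<bar> - 1)" by (rule zero_le_square)
    then show ?thesis using False by (simp add: algebra_simps)
  qed
  ultimately show ?thesis using lo_ee_neg[of m] lo_mono by auto
qed

lemma JTP: "ev (\<lambda>m. ee (- m)) = PQ * (qpoch_inf xx * qpoch_inf (qq * xinv))"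
proof -
  have d: "dec (\<lambda>m. PQ * cJ n m)" for n by (intro dec_cmult dec_cJ)
  have u: "uvan (\<lambda>n m. PQ * cJ n m - ee (- m))"
    by (rule uvan_lo[where c = 0]) (simp add: coef_lo)
  have t1: "tends (\<lambda>n. ev (\<lambda>m. PQ * cJ n m)) (ev (\<lambda>m. ee (- m)))"
    by (rule ev_limit[OF d dec_ee_neg u])
  have e: "ev (\<lambda>m. PQ * cJ n m) = PQ * (qpoch xx n * qpoch (qq * xinv) n)" for n
    by (simp add: ev_cmult dec_cJ FJ_ev[symmetric] FJ_def)
  have t2: "tends (\<lambda>n. PQ * (qpoch xx n * qpoch (qq * xinv) n)) (PQ * (qpoch_inf xx * qpoch_inf (qq * xinv)))"
    by (intro tends_cmult tends_mult tends_xx tends_qqxinv)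
  show ?thesis using t1 t2 tends_unique unfolding e by blast
qed

section \<open>Interchange of summation\<close>

lemma interchange:
  fixes t :: "nat \<Rightarrow> nat \<Rightarrow> vser" and c :: int
  assumes lo_t: "\<And>k i. lo (t k i) (int i + c)"
    and zero: "\<And>k i. i < k \<Longrightarrow> t k i = 0"
  shows "tends (\<lambda>N. \<Sum>k<N. fls_suminf (t k)) (fls_suminf (\<lambda>i. \<Sum>k\<in>{0..i}. t k i))"
    and "tends (\<lambda>N. \<Sum>i<N. \<Sum>k\<in>{0..i}. t k i) (fls_suminf (\<lambda>i. \<Sum>k\<in>{0..i}. t k i))"
proof -
  define u where "u i = (\<Sum>k\<in>{0..i}. t k i)" for i
  have lu: "lo (u i) (int i + c)" for i unfolding u_def by (intro lo_sum lo_t)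
  have tu: "tends u 0" by (rule tends_zero_lo_linear[OF lu])
  show U: "tends (\<lambda>N. \<Sum>i<N. \<Sum>k\<in>{0..i}. t k i) (fls_suminf (\<lambda>i. \<Sum>k\<in>{0..i}. t k i))"
    using suminf_tends[OF tu] unfolding u_def .
  have tk: "tends (t k) 0" for k by (rule tends_zero_lo_linear[OF lo_t])
  have swap: "(\<Sum>i<N. u i) = (\<Sum>k<N. \<Sum>i<N. t k i)" for N
  proof -
    have "(\<Sum>i<N. u i) = (\<Sum>i<N. \<Sum>k<N. t k i)"
    proof (rule sum.cong[OF refl])
      fix i assume "i \<in> {..<N}"
      then have "{..<N} = {0..i} \<union> {i<..<N}" by auto
      moreover have "(\<Sum>k\<in>{i<..<N}. t k i) = 0" by (intro sum.neutral) (auto intro: zero)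
      moreover have "(\<Sum>k\<in>{0..i} \<union> {i<..<N}. t k i) = (\<Sum>k\<in>{0..i}. t k i) + (\<Sum>k\<in>{i<..<N}. t k i)"
        by (rule sum.union_disjoint) auto
      ultimately show "u i = (\<Sum>k<N. t k i)" unfolding u_def by simp
    qed
    also have "\<dots> = (\<Sum>k<N. \<Sum>i<N. t k i)" by (rule sum.swap)
    finally show ?thesis .
  qed
  have diff: "lo ((\<Sum>k<N. fls_suminf (t k)) - (\<Sum>i<N. u i)) (int N + c)" for N
  proof -
    have "(\<Sum>k<N. fls_suminf (t k)) - (\<Sum>i<N. u i) = (\<Sum>k<N. fls_suminf (t k) - (\<Sum>i<N. t k i))"
      unfolding swap by (simp add: sum_subtractf)
    also have "lo \<dots> (int N + c)"
      by (intro lo_sum tail_lo[OF tk]) (rule lo_mono[OF lo_t], simp)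
    finally show ?thesis .
  qed
  have "tends (\<lambda>N. (\<Sum>k<N. fls_suminf (t k)) - (\<Sum>i<N. u i)) 0"
    by (rule tends_zero_lo_linear[OF diff])
  from tends_add[OF this U[folded u_def]]
  show "tends (\<lambda>N. \<Sum>k<N. fls_suminf (t k)) (fls_suminf (\<lambda>i. \<Sum>k\<in>{0..i}. t k i))"
    unfolding u_def by simp
qed

lemma embq_nth: "fls_nth (embq f) m = (if 2 dvd m then of_int (fls_nth f (m div 2)) else 0)"
  unfolding embq_def by (simp add: fls_nth_compose_power fls_of_int_coeffs.rep_eq)

lemma lo_embq: "(\<And>m. m < L \<Longrightarrow> fls_nth f m = 0) \<Longrightarrow> lo (embq f) (2 * L)"
  unfolding lo_def embq_nth by auto

lemma div2_ge: "y - 1 \<le> 2 * (y div 2)" for y :: int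
  by linarith

lemma bound_t:
  assumes C: "\<forall>n<0. a n \<noteq> 0 \<longrightarrow> fls_subdegree (a n) \<ge> - (n * (n + 3)) div 2 + C"
  shows "lo (embq (a (- int k - 1)) * (bk k i * theta i)) (int i + (2 * C + 1))"
proof -
  define L where "L = - ((- int k - 1) * (- int k - 1 + 3)) div 2 + C"
  have la: "lo (embq (a (- int k - 1))) (2 * L)"
  proof (rule lo_embq)
    fix m assume "m < L"
    show "fls_nth (a (- int k - 1)) m = 0"
    proof (cases "a (- int k - 1) = 0")
      case False
      have h: "- int k - 1 < 0 \<longrightarrow> a (- int k - 1) \<noteq> 0 \<longrightarrow> fls_subdegree (a (- int k - 1)) \<ge> - ((- int k - 1) * (- int k - 1 + 3)) div 2 + C"
        by (rule spec[OF C])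
      then have "L \<le> fls_subdegree (a (- int k - 1))" using False unfolding L_def by simp
      then show ?thesis using \<open>m < L\<close> by simp
    qed simp
  qed
  have lb: "lo (bk k i) (- int (2 * k) * (int (k + i) - int (2 * k)))"
    unfolding bk_def by (rule qbinom_lo)
  have "lo (embq (a (- int k - 1)) * (bk k i * theta i)) (2 * L + (- int (2 * k) * (int (k + i) - int (2 * k)) + int i * (int i + 1)))"
    by (intro lo_mult la lb lo_theta)
  then show ?thesis
  proof (rule lo_mono)
    have "- ((- int k - 1) * (- int k - 1 + 3)) - 1 \<le> 2 * (- ((- int k - 1) * (- int k - 1 + 3)) div 2)"
      by (rule div2_ge)
    moreover have "0 \<le> (int i - int k) * (int i - int k)" by (rule zero_le_square)
    ultimately show "int i + (2 * C + 1) \<le> 2 * L + (- int (2 * k) * (int (k + i) - int (2 * k)) + int i * (int i + 1))"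
      unfolding L_def by (simp add: algebra_simps)
  qed
qed

lemma nth0_nz: "lo (f - g) 1 \<Longrightarrow> fls_nth g 0 \<noteq> 0 \<Longrightarrow> f \<noteq> 0"
proof
  assume "lo (f - g) 1" "fls_nth g 0 \<noteq> 0" "f = 0"
  then have "fls_nth (f - g) 0 = 0" by (simp add: lo_def)
  then show False using \<open>fls_nth g 0 \<noteq> 0\<close> \<open>f = 0\<close> by simp
qed

lemma D_nz: "qpoch_inf qq * qpoch_inf xx * qpoch_inf (qq * xinv) \<noteq> 0"
proof -
  have "PQ \<noteq> 0"
    by (rule nth0_nz[of _ 1]) (use qq_tail[of 0] in \<open>auto intro: lo_mono\<close>)
  moreover have "qpoch_inf xx \<noteq> 0"
  proof (rule nth0_nz[of _ "1 - xx"])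
    show "lo (qpoch_inf xx - (1 - xx)) 1"
      using qpoch_tail[OF lo_xx, of 1] by (simp add: qpoch_def) (auto intro: lo_mono)
    show "fls_nth (1 - xx) 0 \<noteq> 0" using xvar_ne1 by (simp add: xx_def)
  qed
  moreover have "qpoch_inf (qq * xinv) \<noteq> 0"
    by (rule nth0_nz[of _ 1]) (use qpoch_tail[OF lo_qqxinv, of 0] in auto)
  ultimately show ?thesis by simp
qed

theorem theorem4p4:
  fixes a :: "int \<Rightarrow> int fls"
  assumes "lower_bound_cond a"
  shows "(\<forall>i. fls_summable (theta_inner_term i))
    \<and> fls_summable (P_term a)
    \<and> fls_summable (\<lambda>i. f_coef a i * theta i)
    \<and> fls_convergent (qpoch qq) \<and> fls_convergent (qpoch xx) \<and> fls_convergent (qpoch (qq * xinv))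
    \<and> fls_suminf (P_term a)
        = inverse (qpoch_inf qq * qpoch_inf xx * qpoch_inf (qq * xinv))
          * fls_suminf (\<lambda>i. f_coef a i * theta i)"
proof -
  obtain C where C: "\<forall>n<0. a n \<noteq> 0 \<longrightarrow> fls_subdegree (a n) \<ge> - (n * (n + 3)) div 2 + C"
    using assms unfolding lower_bound_cond_def by blast
  define D where "D = qpoch_inf qq * qpoch_inf xx * qpoch_inf (qq * xinv)"
  have Dnz: "D \<noteq> 0" unfolding D_def by (rule D_nz)
  have SkD: "Sk k = sigma_tilde k * D" for k
  proof -
    have "Sk k = sigma_tilde k * ((1 - xx) * Sk 0)" by (rule Sk_sigma)
    also have "(1 - xx) * Sk 0 = qpoch_inf qq * (qpoch_inf xx * qpoch_inf (qq * xinv))"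
      by (simp only: base JTP)
    finally show ?thesis unfolding D_def by (simp add: mult.assoc)
  qed
  define t where "t k i = embq (a (- int k - 1)) * (bk k i * theta i)" for k i
  have lo_t: "lo (t k i) (int i + (2 * C + 1))" for k i
    unfolding t_def by (rule bound_t[OF C])
  have zero: "t k i = 0" if "i < k" for k i
    unfolding t_def bk_def using that by (simp add: qbinom_above)
  have Rk: "fls_suminf (t k) = embq (a (- int k - 1)) * Sk k" for k
  proof (rule tends_suminf)
    have "tends (\<lambda>N. embq (a (- int k - 1)) * (\<Sum>i<N. bk k i * theta i)) (embq (a (- int k - 1)) * Sk k)"
      by (rule tends_cmult[OF S_series])
    then show "tends (\<lambda>N. \<Sum>i<N. t k i) (embq (a (- int k - 1)) * Sk k)"
      unfolding t_def by (simp add: sum_distrib_left)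
  qed
  have Pt: "P_term a k = inverse D * fls_suminf (t k)" for k
    unfolding Rk SkD P_term_def using Dnz by (simp add: field_simps)
  have fc: "(\<lambda>i. f_coef a i * theta i) = (\<lambda>i. \<Sum>k\<in>{0..i}. t k i)"
    unfolding f_coef_def t_def bk_def by (simp add: sum_distrib_left sum_distrib_right mult_ac)
  define U where "U = fls_suminf (\<lambda>i. \<Sum>k\<in>{0..i}. t k i)"
  note I = interchange[of t "2 * C + 1", OF lo_t zero]
  have T1: "tends (\<lambda>N. \<Sum>k<N. P_term a k) (inverse D * U)"
  proof -
    have "tends (\<lambda>N. inverse D * (\<Sum>k<N. fls_suminf (t k))) (inverse D * U)"
      unfolding U_def by (rule tends_cmult[OF I(1)])
    then show ?thesis unfolding Pt by (simp add: sum_distrib_left)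
  qed
  have T2: "tends (\<lambda>N. \<Sum>i<N. f_coef a i * theta i) U"
    unfolding fc U_def by (rule I(2))
  show ?thesis
  proof (intro conjI allI)
    show "fls_summable (theta_inner_term i)" for i
      by (rule tends_summable[OF suminf_tends[OF summable_theta_inner]])
    show "fls_summable (P_term a)" by (rule tends_summable[OF T1])
    show "fls_summable (\<lambda>i. f_coef a i * theta i)" by (rule tends_summable[OF T2])
    show "fls_convergent (qpoch qq)" by (rule tends_convergent[OF tends_qq])
    show "fls_convergent (qpoch xx)" by (rule tends_convergent[OF tends_xx])
    show "fls_convergent (qpoch (qq * xinv))" by (rule tends_convergent[OF tends_qqxinv])
    show "fls_suminf (P_term a) = inverse (qpoch_inf qq * qpoch_inf xx * qpoch_inf (qq * xinv)) * fls_suminf (\<lambda>i. f_coef a i * theta i)"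
      using tends_suminf[OF T1] tends_suminf[OF T2] unfolding D_def by simp
  qed
qed

end
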